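(* Let $2<p<4$, assume (V), fix $k\in\mathbb{N}$ and $\mathbf{r}_k\in\Lambda_k$. Let $(u_1,\dots,u_{k+1})\in\mathbf{H}_k$ with $u_i\neq0$ and $$\frac{\big(\int_{B_i}|u_i|^p\,dx\big)^{2/p}}{\|u_i\|_i^2}\ \ge\ (2S_p)^{-1}\qquad\text{for } i=1,\dots,k+1.$$ Set $$\widehat b:=\frac{p-2}{4-p}\Big(1+k\,2^{\frac{2}{p-2}}\Big(\frac{2}{4-p}\Big)^{\frac{2}{p-2}}\Big)^{-1}\Big(\frac{4-p}{2}\Big)^{\frac{2}{p-2}}(2S_p)^{-\frac{p}{p-2}},\qquad b_*:=\min\Big\{\frac{p-2}{4-p}\Big(\frac{4-p}{2}\Big)^{\frac{2}{p-2}}(2S_p)^{-\frac{p}{p-2}},\ \widehat b\Big\}.$$ Then for each $b\in(0,b_* )$ there is a unique $(k+1)$-tuple $(t_1,\dots,t_{k+1})\in(0,\infty)^{k+1}$ such that $(t_1u_1,\dots,t_{k+1}u_{k+1})\in N_k^-$.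
   Context: Condition (V): $V$ is continuous, radial, and $\inf_{\mathbb{R}^3}V=V_0>0$. $\mathcal{H}$ is the space of radial $H^1(\mathbb{R}^3)$ functions with finite norm $\|u\|_{\mathcal{H}}^2=\int(|\nabla u|^2+V u^2)dx$, and $S_q:=\inf_{u\in\mathcal{H}\setminus\{0\}}\|u\|_{\mathcal{H}}^2/|u|_q^2$ for $q\in(2,6]$. $\Lambda_k:=\{\mathbf{r}_k=(r_1,\dots,r_k):0=:r_0<r_1<\dots<r_k<r_{k+1}:=\infty\}$; for $\mathbf{r}_k\in\Lambda_k$, $B_i:=\{x\in\mathbb{R}^3:r_{i-1}<|x|<r_i\}$, $i=1,\dots,k+1$. $\mathcal{H}_i:=\{u\in H^1_0(B_i): u \text{ radial},\ u=0 \text{ outside } B_i\}$ with norm $\|u\|_i^2=\int_{B_i}(|\nabla u|^2+V(|x|)u^2)dx$, and $\mathbf{H}_k:=\mathcal{H}_1\times\dots\times\mathcal{H}_{k+1}$. For $b>0$, $E_b(u_1,\dots,u_{k+1}):=\frac12\sum_i\|u_i\|_i^2+\frac b4\big(\sum_i\int_{B_i}|\nabla u_i|^2dx\big)^2-\frac1p\sum_i\int_{B_i}|u_i|^pdx$ (so $E_b(u_1,\dots,u_{k+1})=I_b(\sum_i u_i)$). The set $N_k^-$ consists of all $(u_1,\dots,u_{k+1})\in\mathbf{H}_k$ such that for every $i$: $u_i\neq0$, $\|u_i\|_i^2+b\big(\int_{B_i}|\nabla u_i|^2\big)^2+b\int_{B_i}|\nabla u_i|^2\sum_{j\neq i}\int_{B_j}|\nabla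 u_j|^2=\int_{B_i}|u_i|^p$ (i.e. $\langle\partial_{u_i}E_b,u_i\rangle=0$), and $(4-p)\int_{B_i}|u_i|^pdx<2\|u_i\|_i^2$. *)

theory Defs
  imports "HOL-Analysis.Analysis"
begin

type_synonym R3 = "real^3"

definition c1c_grad :: "(R3 \<Rightarrow> real) \<Rightarrow> (R3 \<Rightarrow> R3) \<Rightarrow> bool" where
  "c1c_grad phi dphi \<longleftrightarrow> continuous_on UNIV dphi
     \<and> (\<forall>x. (phi has_derivative (\<lambda>h. dphi x \<bullet> h)) (at x))
     \<and> compact (closure {x. phi x \<noteq> 0})"

definition test_fun :: "(R3 \<Rightarrow> real) \<Rightarrow> R3 set \<Rightarrow> bool" where
  "test_fun phi Omega \<longleftrightarrow> (\<exists>dphi. c1c_grad phi dphi) \<and> closure {x. phi x \<noteq> 0} \<subseteq> Omega"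

definition is_weak_grad :: "(R3 \<Rightarrow> real) \<Rightarrow> (R3 \<Rightarrow> R3) \<Rightarrow> bool" where
  "is_weak_grad u g \<longleftrightarrow> g \<in> borel_measurable lborel
     \<and> integrable lborel (\<lambda>x. (norm (g x))\<^sup>2)
     \<and> (\<forall>phi dphi. c1c_grad phi dphi \<longrightarrow>
          (\<forall>j. (\<integral>x. u x * (dphi x $ j) \<partial>lborel) = - (\<integral>x. (g x $ j) * phi x \<partial>lborel)))"

definition grad :: "(R3 \<Rightarrow> real) \<Rightarrow> R3 \<Rightarrow> R3" where
  "grad u = (SOME g. is_weak_grad u g)"

definition H1 :: "(R3 \<Rightarrow> real) \<Rightarrow> bool" where
  "H1 u \<longleftrightarrow> u \<in> borel_measurable lborel \<and> integrable lborel (\<lambda>x. (u x)\<^sup>2)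
     \<and> (\<exists>g. is_weak_grad u g)"

definition h1_sq :: "(R3 \<Rightarrow> real) \<Rightarrow> real" where
  "h1_sq u = (\<integral>x. (u x)\<^sup>2 \<partial>lborel) + (\<integral>x. (norm (grad u x))\<^sup>2 \<partial>lborel)"

definition H10 :: "R3 set \<Rightarrow> (R3 \<Rightarrow> real) \<Rightarrow> bool" where
  "H10 Omega u \<longleftrightarrow> H1 u \<and> (\<exists>phis. (\<forall>n. test_fun (phis n) Omega)
      \<and> (\<lambda>n. h1_sq (\<lambda>x. phis n x - u x)) \<longlonglongrightarrow> 0)"

definition radial :: "(R3 \<Rightarrow> real) \<Rightarrow> bool" where
  "radial u \<longleftrightarrow> (\<forall>x y. norm x = norm y \<longrightarrow> u x = u y)"

definition nonzero :: "(R3 \<Rightarrow> real) \<Rightarrow> bool" where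
  "nonzero u \<longleftrightarrow> \<not> (AE x in lborel. u x = 0)"

definition cond_V :: "(R3 \<Rightarrow> real) \<Rightarrow> bool" where
  "cond_V V \<longleftrightarrow> continuous_on UNIV V \<and> radial V \<and> bdd_below (range V) \<and> (INF x. V x) > 0"

definition Hsp :: "(R3 \<Rightarrow> real) \<Rightarrow> (R3 \<Rightarrow> real) \<Rightarrow> bool" where
  "Hsp V u \<longleftrightarrow> H1 u \<and> radial u \<and> integrable lborel (\<lambda>x. V x * (u x)\<^sup>2)"

definition Hnorm_sq :: "(R3 \<Rightarrow> real) \<Rightarrow> (R3 \<Rightarrow> real) \<Rightarrow> real" where
  "Hnorm_sq V u = (\<integral>x. (norm (grad u x))\<^sup>2 + V x * (u x)\<^sup>2 \<partial>lborel)"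

definition Lp_int :: "real \<Rightarrow> (R3 \<Rightarrow> real) \<Rightarrow> real" where
  "Lp_int q u = (\<integral>x. \<bar>u x\<bar> powr q \<partial>lborel)"

definition S_const :: "(R3 \<Rightarrow> real) \<Rightarrow> real \<Rightarrow> real" where
  "S_const V q = Inf {Hnorm_sq V u / (Lp_int q u) powr (2 / q) | u. Hsp V u \<and> nonzero u}"

text \<open>Lambda_k: r 0 = 0 < r 1 < ... < r k  (r (k+1) = infinity implicitly).\<close>
definition Lambda :: "nat \<Rightarrow> (nat \<Rightarrow> real) \<Rightarrow> bool" where
  "Lambda k r \<longleftrightarrow> r 0 = 0 \<and> (\<forall>i<k. r i < r (Suc i))"

text \<open>B_i = {r_(i-1) < |x| < r_i}, i = 1..k+1, with r_(k+1) = infinity.\<close>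
definition annulus :: "nat \<Rightarrow> (nat \<Rightarrow> real) \<Rightarrow> nat \<Rightarrow> R3 set" where
  "annulus k r i = {x. r (i - 1) < norm x \<and> (i \<le> k \<longrightarrow> norm x < r i)}"

definition Hi :: "(R3 \<Rightarrow> real) \<Rightarrow> nat \<Rightarrow> (nat \<Rightarrow> real) \<Rightarrow> nat \<Rightarrow> (R3 \<Rightarrow> real) \<Rightarrow> bool" where
  "Hi V k r i u \<longleftrightarrow> H10 (annulus k r i) u \<and> radial u \<and> (\<forall>x. x \<notin> annulus k r i \<longrightarrow> u x = 0)
     \<and> integrable lborel (\<lambda>x. V x * (u x)\<^sup>2)"

definition norm_i_sq :: "(R3 \<Rightarrow> real) \<Rightarrow> nat \<Rightarrow> (nat \<Rightarrow> real) \<Rightarrow> nat \<Rightarrow> (R3 \<Rightarrow> real) \<Rightarrow> real" where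
  "norm_i_sq V k r i u = (LINT x : annulus k r i | lborel. (norm (grad u x))\<^sup>2 + V x * (u x)\<^sup>2)"

definition dir_i :: "nat \<Rightarrow> (nat \<Rightarrow> real) \<Rightarrow> nat \<Rightarrow> (R3 \<Rightarrow> real) \<Rightarrow> real" where
  "dir_i k r i u = (LINT x : annulus k r i | lborel. (norm (grad u x))\<^sup>2)"

definition lp_i :: "real \<Rightarrow> nat \<Rightarrow> (nat \<Rightarrow> real) \<Rightarrow> nat \<Rightarrow> (R3 \<Rightarrow> real) \<Rightarrow> real" where
  "lp_i p k r i u = (LINT x : annulus k r i | lborel. \<bar>u x\<bar> powr p)"

definition Hk :: "(R3 \<Rightarrow> real) \<Rightarrow> nat \<Rightarrow> (nat \<Rightarrow> real) \<Rightarrow> (nat \<Rightarrow> R3 \<Rightarrow> real) \<Rightarrow> bool" where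
  "Hk V k r w \<longleftrightarrow> (\<forall>i\<in>{1..k+1}. Hi V k r i (w i))"

definition Nminus :: "(R3 \<Rightarrow> real) \<Rightarrow> real \<Rightarrow> real \<Rightarrow> nat \<Rightarrow> (nat \<Rightarrow> real) \<Rightarrow> (nat \<Rightarrow> R3 \<Rightarrow> real) \<Rightarrow> bool" where
  "Nminus V p b k r w \<longleftrightarrow> Hk V k r w \<and> (\<forall>i\<in>{1..k+1}.
      nonzero (w i)
      \<and> norm_i_sq V k r i (w i) + b * (dir_i k r i (w i))\<^sup>2
          + b * dir_i k r i (w i) * (\<Sum>j\<in>{1..k+1} - {i}. dir_i k r j (w j)) = lp_i p k r i (w i)
      \<and> (4 - p) * lp_i p k r i (w i) < 2 * norm_i_sq V k r i (w i))"

end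

theory Submission
  imports Defs
begin

definition mq :: "real \<Rightarrow> real" where "mq y = (max 0 y)^2"

lemma mq_quot_bound: "\<bar>mq h / h\<bar> \<le> \<bar>h\<bar>"
proof (cases "h > 0")
  case True
  then have "mq h / h = h" by (simp add: mq_def power2_eq_square)
  then show ?thesis by simp
next
  case False
  then have "mq h = 0" by (simp add: mq_def)
  then show ?thesis by simp
qed

lemma mq_deriv: "(mq has_real_derivative 2 * max 0 y) (at y)"
proof (cases "y = 0")
  case True
  have "((\<lambda>h. (mq (0 + h) - mq 0) / h) \<longlongrightarrow> 0) (at 0)"
  proof (rule tendsto_sandwich[of "\<lambda>h. - \<bar>h\<bar>" _ _ "\<lambda>h. \<bar>h\<bar>"])
    have m0: "mq 0 = 0" by (simp add: mq_def)
    show "\<forall>\<^sub>F h in at 0. - \<bar>h\<bar> \<le> (mq (0 + h) - mq 0) / h"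
    proof (intro always_eventually allI)
      fix h :: real
      have "\<bar>mq h / h\<bar> \<le> \<bar>h\<bar>" by (rule mq_quot_bound)
      then have "mq h / h \<le> \<bar>h\<bar> \<and> - (mq h / h) \<le> \<bar>h\<bar>" by (simp only: abs_le_iff)
      then show "- \<bar>h\<bar> \<le> (mq (0 + h) - mq 0) / h" using m0 by simp
    qed
    show "\<forall>\<^sub>F h in at 0. (mq (0 + h) - mq 0) / h \<le> \<bar>h\<bar>"
    proof (intro always_eventually allI)
      fix h :: real
      have "\<bar>mq h / h\<bar> \<le> \<bar>h\<bar>" by (rule mq_quot_bound)
      then have "mq h / h \<le> \<bar>h\<bar> \<and> - (mq h / h) \<le> \<bar>h\<bar>" by (simp only: abs_le_iff)
      then show "(mq (0 + h) - mq 0) / h \<le> \<bar>h\<bar>" using m0 by simp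
    qed
    have "((\<lambda>h. - \<bar>h\<bar>) \<longlongrightarrow> - \<bar>0\<bar>) (at (0::real))"
      by (intro tendsto_intros)
    then show "((\<lambda>h. - \<bar>h\<bar>) \<longlongrightarrow> 0) (at (0::real))" by simp
    have "((\<lambda>h. \<bar>h\<bar>) \<longlongrightarrow> \<bar>0\<bar>) (at (0::real))"
      by (intro tendsto_intros)
    then show "((\<lambda>h. \<bar>h\<bar>) \<longlongrightarrow> 0) (at (0::real))" by simp
  qed
  then show ?thesis using True by (simp add: DERIV_def)
next
  case False
  show ?thesis
  proof (cases "y > 0")
    case True
    have d: "((\<lambda>y. y^2) has_real_derivative 2 * max 0 y) (at y)"
      using True by (auto intro!: derivative_eq_intros)
    show ?thesis
    proof (rule has_field_derivative_transform_within_open[OF d, of "{0<..}"])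
      show "y \<in> {0<..}" using True by simp
    qed (auto simp: mq_def True)
  next
    case F2: False
    have d: "((\<lambda>y. 0) has_real_derivative 2 * max 0 y) (at y)"
      using F2 by (auto intro!: derivative_eq_intros)
    show ?thesis
    proof (rule has_field_derivative_transform_within_open[OF d, of "{..<0}"])
      show "y \<in> {..<0}" using F2 False by simp
    qed (use F2 False in \<open>auto simp: mq_def\<close>)
  qed
qed

definition gs :: "real \<Rightarrow> real" where "gs y = 2 * (mq y - 2 * mq (y - 1/2) + mq (y - 1))"
definition gs' :: "real \<Rightarrow> real" where "gs' y = 4 * (max 0 y - 2 * max 0 (y - 1/2) + max 0 (y - 1))"

lemma mq_shift_deriv: "((\<lambda>y. mq (y - c)) has_real_derivative 2 * max 0 (y - c)) (at y)"
proof -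
  have "((\<lambda>y. y - c) has_real_derivative 1) (at y)" by (auto intro!: derivative_eq_intros)
  from DERIV_chain2[OF mq_deriv this] show ?thesis by simp
qed

lemma gs_deriv: "(gs has_real_derivative gs' y) (at y)"
proof -
  have "((\<lambda>y. 2 * (mq (y - 0) - 2 * mq (y - 1/2) + mq (y - 1))) has_real_derivative
     2 * (2 * max 0 (y - 0) - 2 * (2 * max 0 (y - 1/2)) + 2 * max 0 (y - 1))) (at y)"
    by (intro DERIV_cmult DERIV_add DERIV_diff mq_shift_deriv)
  then show ?thesis unfolding gs_def[abs_def] gs'_def by (simp add: algebra_simps)
qed

lemma gs_cont: "continuous_on UNIV gs'"
  unfolding gs'_def by (intro continuous_intros)

lemma gs_le0: "y \<le> 0 \<Longrightarrow> gs y = 0" by (simp add: gs_def mq_def)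
lemma gs_ge1: "y \<ge> 1 \<Longrightarrow> gs y = 1"
proof -
  assume y: "y \<ge> 1"
  have "gs y = 2 * (y^2 - 2 * (y - 1/2)^2 + (y-1)^2)" using y by (simp add: gs_def mq_def)
  also have "\<dots> = 1" by (simp add: power2_eq_square algebra_simps)
  finally show ?thesis .
qed
lemma gs_range: "0 \<le> gs y \<and> gs y \<le> 1"
proof -
  consider "y \<le> 0" | "0 \<le> y \<and> y \<le> 1/2" | "1/2 \<le> y \<and> y \<le> 1" | "1 \<le> y" by linarith
  then show ?thesis
  proof cases
    case 2
    then have "gs y = 2 * y^2" by (simp add: gs_def mq_def)
    moreover have "y^2 \<le> (1/2)^2" using 2 by (intro power_mono) auto
    ultimately show ?thesis by (simp add: power2_eq_square)
  next
    case 3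
    then have a: "max 0 y = y" "max 0 (y - 1/2) = y - 1/2" "max 0 (y - 1) = 0" by auto
    have "gs y = 2 * (y^2 - 2 * (y - 1/2)^2)" by (simp add: gs_def mq_def a)
    also have "\<dots> = 1 - 2 * (1 - y)^2" by (simp add: power2_eq_square algebra_simps)
    finally have e: "gs y = 1 - 2 * (1 - y)^2" .
    have "(1-y)^2 \<le> (1/2)^2" using 3 by (intro power_mono) auto
    then show ?thesis using e by (simp add: power2_eq_square)
  qed (auto simp: gs_le0 gs_ge1)
qed


definition psi :: "real \<Rightarrow> real \<Rightarrow> real \<Rightarrow> real \<Rightarrow> real" where
  "psi n \<alpha> \<beta> s = gs (n * (s - \<alpha>)) * gs (n * (\<beta> - s))"
definition psi' :: "real \<Rightarrow> real \<Rightarrow> real \<Rightarrow> real \<Rightarrow> real" where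
  "psi' n \<alpha> \<beta> s = n * gs' (n * (s - \<alpha>)) * gs (n * (\<beta> - s)) - n * gs (n * (s - \<alpha>)) * gs' (n * (\<beta> - s))"

lemma gs_cont0: "continuous_on UNIV gs"
  unfolding gs_def mq_def by (intro continuous_intros)

lemma psi_deriv: "(psi n \<alpha> \<beta> has_real_derivative psi' n \<alpha> \<beta> s) (at s)"
proof -
  have d1: "((\<lambda>s. n * (s - \<alpha>)) has_real_derivative n) (at s)" by (auto intro!: derivative_eq_intros)
  have d2: "((\<lambda>s. n * (\<beta> - s)) has_real_derivative - n) (at s)" by (auto intro!: derivative_eq_intros)
  from DERIV_mult[OF DERIV_chain2[OF gs_deriv d1] DERIV_chain2[OF gs_deriv d2]]
  show ?thesis unfolding psi_def[abs_def] psi'_def by (simp add: algebra_simps)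
qed

lemma psi_cont: "continuous_on UNIV (psi n \<alpha> \<beta>)"
  unfolding psi_def[abs_def] 
  by (intro continuous_intros continuous_on_compose2[OF gs_cont0]) auto

lemma psi'_cont: "continuous_on UNIV (psi' n \<alpha> \<beta>)"
  unfolding psi'_def[abs_def] 
  by (intro continuous_intros continuous_on_compose2[OF gs_cont0] continuous_on_compose2[OF gs_cont]) auto

lemma psi_range: "0 \<le> psi n \<alpha> \<beta> s \<and> psi n \<alpha> \<beta> s \<le> 1"
  unfolding psi_def using gs_range[of "n * (s - \<alpha>)"] gs_range[of "n * (\<beta> - s)"]
  by (auto intro: mult_le_one)

lemma psi_nz: "n > 0 \<Longrightarrow> psi n \<alpha> \<beta> s \<noteq> 0 \<Longrightarrow> \<alpha> < s \<and> s < \<beta>"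
proof -
  assume n: "n > 0" and nz: "psi n \<alpha> \<beta> s \<noteq> 0"
  show ?thesis
  proof (rule ccontr)
    assume "\<not> (\<alpha> < s \<and> s < \<beta>)"
    then have "n * (s - \<alpha>) \<le> 0 \<or> n * (\<beta> - s) \<le> 0" using n
      by (auto simp: mult_le_0_iff)
    then show False using nz by (auto simp: psi_def gs_le0)
  qed
qed

lemma psi_one: "n > 0 \<Longrightarrow> n * (s - \<alpha>) \<ge> 1 \<Longrightarrow> n * (\<beta> - s) \<ge> 1 \<Longrightarrow> psi n \<alpha> \<beta> s = 1"
  by (simp add: psi_def gs_ge1)

definition tf :: "real \<Rightarrow> R3 \<Rightarrow> R3 \<Rightarrow> R3 \<Rightarrow> real" where
  "tf n a b x = (\<Prod>i\<in>UNIV. psi n (a$i) (b$i) (x$i))"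
definition dtf :: "real \<Rightarrow> R3 \<Rightarrow> R3 \<Rightarrow> R3 \<Rightarrow> R3" where
  "dtf n a b x = (\<chi> i. psi' n (a$i) (b$i) (x$i) * (\<Prod>j\<in>UNIV - {i}. psi n (a$j) (b$j) (x$j)))"

lemma tf_deriv: "(tf n a b has_derivative (\<lambda>h. dtf n a b x \<bullet> h)) (at x)"
proof -
  have c: "((\<lambda>x. psi n (a$i) (b$i) (x$i)) has_derivative (\<lambda>y. psi' n (a$i) (b$i) (x$i) * (y$i))) (at x)" for i
  proof -
    have l: "((\<lambda>x::R3. x$i) has_derivative (\<lambda>y. y$i)) (at x)"
      by (rule bounded_linear_imp_has_derivative) (rule bounded_linear_vec_nth)
    from has_derivative_compose[OF l has_field_derivative_imp_has_derivative[OF psi_deriv]]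
    show ?thesis by simp
  qed
  have "((\<lambda>x. \<Prod>i\<in>UNIV. psi n (a$i) (b$i) (x$i)) has_derivative
     (\<lambda>y. \<Sum>i\<in>UNIV. psi' n (a$i) (b$i) (x$i) * (y$i) * (\<Prod>j\<in>UNIV - {i}. psi n (a$j) (b$j) (x$j)))) (at x)"
    by (rule has_derivative_prod) (rule c)
  then show ?thesis unfolding tf_def[abs_def]
    by (rule has_derivative_eq_rhs) (auto simp: dtf_def inner_vec_def intro!: ext sum.cong)
qed

lemma dtf_cont: "continuous_on UNIV (dtf n a b)"
  unfolding dtf_def[abs_def]
  by (intro continuous_intros continuous_on_compose2[OF psi'_cont] continuous_on_compose2[OF psi_cont]) auto

lemma tf_range: "0 \<le> tf n a b x \<and> tf n a b x \<le> 1"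
  unfolding tf_def using psi_range by (auto intro!: prod_nonneg prod_le_1)

lemma tf_supp: "n > 0 \<Longrightarrow> {x. tf n a b x \<noteq> 0} \<subseteq> box a b"
proof
  fix x assume n: "n > 0" and "x \<in> {x. tf n a b x \<noteq> 0}"
  then have "psi n (a$i) (b$i) (x$i) \<noteq> 0" for i by (auto simp: tf_def)
  then show "x \<in> box a b" using psi_nz[OF n] by (auto simp: mem_box_cart)
qed

lemma tf_c1c: "n > 0 \<Longrightarrow> c1c_grad (tf n a b) (dtf n a b)"
proof -
  assume n: "n > 0"
  have "bounded {x. tf n a b x \<noteq> 0}"
    using tf_supp[OF n] bounded_box bounded_subset by blast
  then show ?thesis unfolding c1c_grad_def using dtf_cont tf_deriv by auto
qed

lemma tf_closure: "n > 0 \<Longrightarrow> closure {x. tf n a b x \<noteq> 0} \<subseteq> cbox a b"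
  using tf_supp[of n a b] box_subset_cbox[of a b]
  by (intro closure_minimal) auto

lemma tf_lim: "(\<lambda>N. tf (real N + 1) a b x) \<longlonglongrightarrow> indicator (box a b) x"
proof (cases "x \<in> box a b")
  case True
  then have ab: "a$i < x$i \<and> x$i < b$i" for i by (auto simp: mem_box_cart)
  have ev: "eventually (\<lambda>N. psi (real N + 1) (a$i) (b$i) (x$i) = 1) sequentially" for i
  proof -
    obtain N :: nat where N: "N > 1 / (x$i - a$i)" "N > 1 / (b$i - x$i)"
      using reals_Archimedean2[of "max (1 / (x$i - a$i)) (1 / (b$i - x$i))"] by auto
    show ?thesis
    proof (rule eventually_sequentiallyI[of N])
      fix m assume m: "N \<le> m"
      have p1: "x$i - a$i > 0" "b$i - x$i > 0" using ab[of i] by auto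
      have "real m + 1 \<ge> 1 / (x$i - a$i)" using N m by linarith
      then have 1: "(real m + 1) * (x$i - a$i) \<ge> 1" using p1 by (simp add: divide_le_eq)
      have "real m + 1 \<ge> 1 / (b$i - x$i)" using N m by linarith
      then have 2: "(real m + 1) * (b$i - x$i) \<ge> 1" using p1 by (simp add: divide_le_eq)
      show "psi (real m + 1) (a$i) (b$i) (x$i) = 1" by (rule psi_one) (use 1 2 in auto)
    qed
  qed
  have "eventually (\<lambda>N. \<forall>i. psi (real N + 1) (a$i) (b$i) (x$i) = 1) sequentially"
    by (rule eventually_all_finite) (rule ev)
  then have "eventually (\<lambda>N. tf (real N + 1) a b x = 1) sequentially"
    by eventually_elim (simp add: tf_def)
  then show ?thesis using True by (simp add: tendsto_eventually)
next
  case False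
  have "tf (real N + 1) a b x = 0" for N
    using tf_supp[of "real N + 1" a b] False by auto
  then show ?thesis using False by simp
qed


lemma ae_zero_boxes:
  fixes h :: "R3 \<Rightarrow> real"
  assumes hm[measurable]: "h \<in> borel_measurable lborel"
    and li: "\<And>a b. set_integrable lborel (box a b) h"
    and z: "\<And>a b. (LINT x:box a b|lborel. h x) = 0"
  shows "AE x in lborel. h x = 0"
proof -
  let ?G = "range (\<lambda>(a, b). box a b :: R3 set)"
  have Q: "AE x in lborel. x \<in> box (- (real n *\<^sub>R One)) (real n *\<^sub>R One) \<longrightarrow> h x = 0" for n :: nat
  proof -
    define Q where "Q = box (- (real n *\<^sub>R One)) (real n *\<^sub>R One :: R3)"
    have QS[measurable]: "Q \<in> sets lborel" by (simp add: Q_def)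
    have liQ: "set_integrable lborel Q h" unfolding Q_def by (rule li)
    have liQ': "B \<in> sets lborel \<Longrightarrow> set_integrable lborel (B \<inter> Q) h" for B
      by (rule set_integrable_subset[OF liQ]) auto
    have main: "(LINT x:(A \<inter> Q)|lborel. h x) = 0" if "A \<in> sets borel" for A
    proof -
      have "Int_stable ?G" by (auto simp: Int_stable_def box_Int_box)
      moreover have "?G \<subseteq> Pow UNIV" by auto
      moreover have "A \<in> sigma_sets UNIV ?G" using that unfolding borel_eq_box by simp
      ultimately show ?thesis
      proof (induction rule: sigma_sets_induct_disjoint)
        case (basic A)
        then obtain c d where "A = box c d" by auto
        show ?case using \<open>A = box c d\<close> by (auto simp: Q_def box_Int_box z)
      next
        case empty then show ?case by (simp add: set_lebesgue_integral_def)
      next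
        case (compl A)
        then have AL: "A \<in> sets lborel" by (simp add: borel_eq_box)
        have CL: "UNIV - A \<in> sets lborel" using sets.Diff[OF sets.top AL] by simp
        have d: "(A \<inter> Q) \<inter> ((UNIV - A) \<inter> Q) = {}" by blast
        have u: "(A \<inter> Q) \<union> ((UNIV - A) \<inter> Q) = Q" by blast
        have "(LINT x:(A \<inter> Q) \<union> ((UNIV - A) \<inter> Q)|lborel. h x) = (LINT x:(A \<inter> Q)|lborel. h x) + (LINT x:((UNIV - A) \<inter> Q)|lborel. h x)"
          by (rule set_integral_Un[OF d liQ'[OF AL] liQ'[OF CL]])
        then have "(LINT x:Q|lborel. h x) = (LINT x:(A \<inter> Q)|lborel. h x) + (LINT x:((UNIV - A) \<inter> Q)|lborel. h x)"
          using u by simp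
        moreover have "(LINT x:Q|lborel. h x) = 0" unfolding Q_def by (rule z)
        ultimately show ?case using compl.IH by simp
      next
        case (union F)
        have FL: "F i \<in> sets lborel" for i
        proof -
          have "F i \<in> sigma_sets UNIV ?G" using union.hyps(2) by blast
          then show ?thesis unfolding sets_lborel borel_eq_box by simp
        qed
        have FQ: "F i \<inter> Q \<in> sets lborel" for i using FL[of i] QS by (rule sets.Int)
        have UQ: "(\<Union>i. F i \<inter> Q) \<in> sets lborel" using FQ by (intro sets.countable_nat_UN) blast
        have eq: "(\<Union>i. F i) \<inter> Q = (\<Union>i. F i \<inter> Q)" by blast
        have ce: "(LINT x:(\<Union>i. F i \<inter> Q)|lborel. h x) = (\<Sum>i. (LINT x:(F i \<inter> Q)|lborel. h x))"
        proof (rule lebesgue_integral_countable_add)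
          show "\<And>i. F i \<inter> Q \<in> sets lborel" by (rule FQ)
          show "\<And>i j. i \<noteq> j \<Longrightarrow> (F i \<inter> Q) \<inter> (F j \<inter> Q) = {}"
          proof -
            fix i j :: nat assume "i \<noteq> j"
            then have "F i \<inter> F j = {}" using union.hyps(1) by (simp add: disjoint_family_on_def)
            then show "(F i \<inter> Q) \<inter> (F j \<inter> Q) = {}" by blast
          qed
          show "set_integrable lborel (\<Union>i. F i \<inter> Q) h"
            by (rule set_integrable_subset[OF liQ UQ]) blast
        qed
        have z0: "(\<Sum>i. (LINT x:(F i \<inter> Q)|lborel. h x)) = 0" using union.IH by simp
        show ?case unfolding eq by (rule trans[OF ce z0])
      qed
    qed
    define f where "f x = indicator Q x * h x" for x
    have fe: "f = (\<lambda>x. indicator Q x * h x)" by (rule ext) (simp add: f_def)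
    have fi: "integrable lborel f" using liQ by (simp add: fe set_integrable_def)
    have "AE x in lborel. f x = 0"
    proof (rule density_unique_real[OF fi integrable_zero])
      fix A :: "R3 set" assume A: "A \<in> sets lborel"
      have "(LINT x:A|lborel. f x) = (LINT x:(A \<inter> Q)|lborel. h x)"
        unfolding set_lebesgue_integral_def f_def
        by (intro Bochner_Integration.integral_cong) (auto split: split_indicator)
      also have "\<dots> = 0" using A by (intro main) simp
      finally show "(LINT x:A|lborel. f x) = (LINT x:A|lborel. 0)" by simp
    qed
    then show ?thesis unfolding Q_def[symmetric] by eventually_elim (simp add: f_def indicator_def split: if_splits)
  qed
  have "AE x in lborel. \<forall>n::nat. x \<in> box (- (real n *\<^sub>R One)) (real n *\<^sub>R One) \<longrightarrow> h x = 0"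
    unfolding AE_all_countable using Q by blast
  then show ?thesis
  proof eventually_elim
    case (elim x)
    have "x \<in> (\<Union>i::nat. box (- (real i *\<^sub>R One)) (real i *\<^sub>R One))" unfolding UN_box_eq_UNIV by simp
    then obtain n :: nat where "x \<in> box (- (real n *\<^sub>R One)) (real n *\<^sub>R One)"
      by blast
    then show ?case using elim by blast
  qed
qed

lemma L2_set_integrable:
  fixes h :: "R3 \<Rightarrow> real"
  assumes hm[measurable]: "h \<in> borel_measurable lborel" and h2: "integrable lborel (\<lambda>x. (h x)^2)"
    and B[measurable]: "B \<in> sets lborel" and fin: "emeasure lborel B < \<infinity>"
  shows "set_integrable lborel B h"
  unfolding set_integrable_def
proof (rule Bochner_Integration.integrable_bound[where f="\<lambda>x. (h x)^2 + indicator B x"])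
  show "integrable lborel (\<lambda>x. (h x)^2 + indicator B x)"
  proof -
    have "integrable lborel (indicator B :: R3 \<Rightarrow> real)" using B fin by simp
    then show ?thesis by (rule Bochner_Integration.integrable_add[OF h2])
  qed
  show "(\<lambda>x. indicator B x *\<^sub>R h x) \<in> borel_measurable lborel" by measurable
  show "AE x in lborel. norm (indicator B x *\<^sub>R h x) \<le> norm ((h x)^2 + indicator B x)"
  proof (intro AE_I2)
    fix x
    have "\<bar>h x\<bar> \<le> (h x)^2 + 1"
    proof (cases "\<bar>h x\<bar> \<le> 1")
      case True
      have "0 \<le> (h x)^2" by simp
      then show ?thesis using True by linarith
    next
      case False
      then have "\<bar>h x\<bar> * 1 \<le> \<bar>h x\<bar> * \<bar>h x\<bar>" by (intro mult_left_mono) auto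
      moreover have "(h x)^2 = \<bar>h x\<bar> * \<bar>h x\<bar>" by (simp add: power2_eq_square)
      ultimately show ?thesis by linarith
    qed
    then show "norm (indicator B x *\<^sub>R h x) \<le> norm ((h x)^2 + indicator B x)"
      by (auto split: split_indicator)
  qed
qed


lemma tf_cont: "continuous_on UNIV (tf n a b)"
  unfolding tf_def[abs_def] by (intro continuous_intros continuous_on_compose2[OF psi_cont]) auto

lemma tf_meas[measurable]: "tf n a b \<in> borel_measurable lborel"
  using borel_measurable_continuous_onI[OF tf_cont] by simp

lemma comp_sq_le: "(v $ j)^2 \<le> (norm (v :: R3))^2"
  using component_le_norm_cart[of v j] abs_le_square_iff[of "v $ j" "norm v"] by simp

lemma weak_grad_comp_L2:
  assumes "is_weak_grad w g"
  shows "(\<lambda>x. g x $ j) \<in> borel_measurable lborel" "integrable lborel (\<lambda>x. (g x $ j)^2)"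
proof -
  have gm[measurable]: "g \<in> borel_measurable lborel" and gi: "integrable lborel (\<lambda>x. (norm (g x))\<^sup>2)"
    using assms by (auto simp: is_weak_grad_def)
  show gj: "(\<lambda>x. g x $ j) \<in> borel_measurable lborel" using measurable_compose[OF gm borel_measurable_nth] by simp
  show "integrable lborel (\<lambda>x. (g x $ j)^2)"
  proof (rule Bochner_Integration.integrable_bound[OF gi])
    show "(\<lambda>x. (g x $ j)^2) \<in> borel_measurable lborel" using gj by measurable
    show "AE x in lborel. norm ((g x $ j)^2) \<le> norm ((norm (g x))\<^sup>2)"
      using comp_sq_le by (intro AE_I2) simp
  qed
qed

lemma weak_grad_unique:
  assumes G: "is_weak_grad w g" and G': "is_weak_grad w g'"
  shows "AE x in lborel. g x = g' x"
proof -
  have comp: "AE x in lborel. g x $ j = g' x $ j" for j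
  proof -
    note m1[measurable] = weak_grad_comp_L2(1)[OF G, of j]
    note m2[measurable] = weak_grad_comp_L2(1)[OF G', of j]
    define h where "h x = g x $ j - g' x $ j" for x
    have he: "h = (\<lambda>x. g x $ j - g' x $ j)" by (rule ext) (simp add: h_def)
    have hm[measurable]: "h \<in> borel_measurable lborel" unfolding he by measurable
    have h2: "integrable lborel (\<lambda>x. (h x)^2)"
    proof (rule Bochner_Integration.integrable_bound[where f="\<lambda>x. 2 * (g x $ j)^2 + 2 * (g' x $ j)^2"])
      show "integrable lborel (\<lambda>x. 2 * (g x $ j)^2 + 2 * (g' x $ j)^2)"
        using weak_grad_comp_L2(2)[OF G, of j] weak_grad_comp_L2(2)[OF G', of j] by simp
      show "(\<lambda>x. (h x)^2) \<in> borel_measurable lborel" by measurable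
      show "AE x in lborel. norm ((h x)^2) \<le> norm (2 * (g x $ j)^2 + 2 * (g' x $ j)^2)"
      proof (intro AE_I2)
        fix x
        have "(h x)^2 \<le> 2 * (g x $ j)^2 + 2 * (g' x $ j)^2"
          unfolding h_def using sum_squares_ge_zero[of "g x $ j + g' x $ j" 0]
          by (simp add: power2_eq_square algebra_simps)
        then show "norm ((h x)^2) \<le> norm (2 * (g x $ j)^2 + 2 * (g' x $ j)^2)" by simp
      qed
    qed
    have loc: "set_integrable lborel B h" if "B \<in> sets lborel" "emeasure lborel B < \<infinity>" for B
      by (rule L2_set_integrable[OF hm h2 that])
    have locg: "set_integrable lborel (cbox a b) (\<lambda>x. g x $ j)" for a b
      by (rule L2_set_integrable[OF m1 weak_grad_comp_L2(2)[OF G, of j]]) (auto simp: emeasure_lborel_cbox_eq)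
    have locg': "set_integrable lborel (cbox a b) (\<lambda>x. g' x $ j)" for a b
      by (rule L2_set_integrable[OF m2 weak_grad_comp_L2(2)[OF G', of j]]) (auto simp: emeasure_lborel_cbox_eq)
    have z: "(LINT x:box a b|lborel. h x) = 0" for a b
    proof -
      define s where "s N x = h x * tf (real N + 1) a b x" for N x
      have test: "(\<integral>x. h x * tf (real N + 1) a b x \<partial>lborel) = 0" for N
      proof -
        let ?n = "real N + 1"
        have c1: "c1c_grad (tf ?n a b) (dtf ?n a b)" by (rule tf_c1c) simp
        have e1: "(\<integral>x. w x * (dtf ?n a b x $ j) \<partial>lborel) = - (\<integral>x. (g x $ j) * tf ?n a b x \<partial>lborel)"
          using G c1 unfolding is_weak_grad_def by blast
        have e2: "(\<integral>x. w x * (dtf ?n a b x $ j) \<partial>lborel) = - (\<integral>x. (g' x $ j) * tf ?n a b x \<partial>lborel)"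
          using G' c1 unfolding is_weak_grad_def by blast
        have bnd: "integrable lborel (\<lambda>x. (gg x) * tf ?n a b x)"
          if gm: "gg \<in> borel_measurable lborel" and gl: "set_integrable lborel (cbox a b) gg" for gg
        proof (rule Bochner_Integration.integrable_bound[where f="\<lambda>x. indicator (cbox a b) x *\<^sub>R gg x"])
          show "integrable lborel (\<lambda>x. indicator (cbox a b) x *\<^sub>R gg x)"
            using gl by (simp add: set_integrable_def)
          show "(\<lambda>x. gg x * tf ?n a b x) \<in> borel_measurable lborel" using gm by measurable
          show "AE x in lborel. norm (gg x * tf ?n a b x) \<le> norm (indicator (cbox a b) x *\<^sub>R gg x)"
          proof (intro AE_I2)
            fix x
            have r: "0 \<le> tf ?n a b x" "tf ?n a b x \<le> 1" using tf_range by auto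
            show "norm (gg x * tf ?n a b x) \<le> norm (indicator (cbox a b) x *\<^sub>R gg x)"
            proof (cases "x \<in> cbox a b")
              case True
              then show ?thesis using r by (simp add: abs_mult mult_left_le)
            next
              case False
              then have "tf ?n a b x = 0"
                using tf_closure[of ?n a b] closure_subset[of "{x. tf ?n a b x \<noteq> 0}"] by auto
              then show ?thesis by simp
            qed
          qed
        qed
        have i1: "integrable lborel (\<lambda>x. (g x $ j) * tf ?n a b x)" by (rule bnd[OF m1 locg])
        have i2: "integrable lborel (\<lambda>x. (g' x $ j) * tf ?n a b x)" by (rule bnd[OF m2 locg'])
        have "(\<integral>x. h x * tf ?n a b x \<partial>lborel) = (\<integral>x. (g x $ j) * tf ?n a b x - (g' x $ j) * tf ?n a b x \<partial>lborel)"
          by (simp add: h_def algebra_simps)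
        also have "\<dots> = (\<integral>x. (g x $ j) * tf ?n a b x \<partial>lborel) - (\<integral>x. (g' x $ j) * tf ?n a b x \<partial>lborel)"
          by (rule Bochner_Integration.integral_diff[OF i1 i2])
        also have "\<dots> = 0" using e1 e2 by simp
        finally show ?thesis .
      qed
      have lim: "(\<lambda>N. \<integral>x. s N x \<partial>lborel) \<longlonglongrightarrow> (\<integral>x. h x * indicator (box a b) x \<partial>lborel)"
      proof (rule integral_dominated_convergence[where w="\<lambda>x. \<bar>indicator (cbox a b) x *\<^sub>R h x\<bar>"])
        show "(\<lambda>x. h x * indicator (box a b) x) \<in> borel_measurable lborel" by measurable
        show "s N \<in> borel_measurable lborel" for N unfolding s_def[abs_def] by measurable
        show "integrable lborel (\<lambda>x. \<bar>indicator (cbox a b) x *\<^sub>R h x\<bar>)"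
        proof -
          have "emeasure lborel (cbox a b) < \<infinity>" by (auto simp: emeasure_lborel_cbox_eq)
          then have "integrable lborel (\<lambda>x. indicator (cbox a b) x *\<^sub>R h x)"
            using loc[of "cbox a b"] by (simp add: set_integrable_def)
          then show ?thesis by (rule integrable_abs)
        qed
        show "AE x in lborel. (\<lambda>N. s N x) \<longlonglongrightarrow> h x * indicator (box a b) x"
          unfolding s_def by (intro AE_I2 tendsto_mult tendsto_const tf_lim)
        show "AE x in lborel. norm (s N x) \<le> \<bar>indicator (cbox a b) x *\<^sub>R h x\<bar>" for N
        proof (intro AE_I2)
          fix x
          have r: "0 \<le> tf (real N + 1) a b x" "tf (real N + 1) a b x \<le> 1" using tf_range by auto
          show "norm (s N x) \<le> \<bar>indicator (cbox a b) x *\<^sub>R h x\<bar>"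
          proof (cases "x \<in> cbox a b")
            case True
            then show ?thesis using r by (simp add: s_def abs_mult mult_left_le)
          next
            case False
            then have "tf (real N + 1) a b x = 0"
              using tf_closure[of "real N + 1" a b] closure_subset[of "{x. tf (real N + 1) a b x \<noteq> 0}"] by auto
            then show ?thesis by (simp add: s_def)
          qed
        qed
      qed
      have "(\<lambda>N. \<integral>x. s N x \<partial>lborel) = (\<lambda>N. 0)" by (rule ext) (simp add: s_def test)
      with lim have "(\<integral>x. h x * indicator (box a b) x \<partial>lborel) = 0"
        using LIMSEQ_unique tendsto_const by metis
      then show ?thesis by (simp add: set_lebesgue_integral_def mult.commute)
    qed
    have "AE x in lborel. h x = 0"
      by (rule ae_zero_boxes[OF hm _ z]) (rule loc, auto simp: emeasure_lborel_box_eq)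
    then show ?thesis by eventually_elim (simp add: h_def)
  qed
  have "AE x in lborel. \<forall>j\<in>UNIV. g x $ j = g' x $ j"
    by (rule AE_finite_allI) (auto intro: comp)
  then show ?thesis by eventually_elim (simp add: vec_eq_iff)
qed


lemma weak_grad_scale:
  assumes "is_weak_grad w g"
  shows "is_weak_grad (\<lambda>x. t * w x) (\<lambda>x. t *\<^sub>R g x)"
proof -
  have gm: "g \<in> borel_measurable lborel" and gi: "integrable lborel (\<lambda>x. (norm (g x))\<^sup>2)"
    and ge: "\<And>phi dphi j. c1c_grad phi dphi \<Longrightarrow>
       (\<integral>x. w x * (dphi x $ j) \<partial>lborel) = - (\<integral>x. (g x $ j) * phi x \<partial>lborel)"
    using assms by (auto simp: is_weak_grad_def)
  show ?thesis unfolding is_weak_grad_def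
  proof (intro conjI allI impI)
    show "(\<lambda>x. t *\<^sub>R g x) \<in> borel_measurable lborel" using gm by measurable
    have "integrable lborel (\<lambda>x. t^2 * (norm (g x))\<^sup>2)" using gi by simp
    then show "integrable lborel (\<lambda>x. (norm (t *\<^sub>R g x))\<^sup>2)"
      by (simp add: power_mult_distrib)
    fix phi dphi j assume c: "c1c_grad phi dphi"
    have "(\<integral>x. t * w x * (dphi x $ j) \<partial>lborel) = t * (\<integral>x. w x * (dphi x $ j) \<partial>lborel)"
      by (subst integral_mult_right_zero[symmetric]) (simp add: mult.assoc)
    also have "\<dots> = - (t * (\<integral>x. (g x $ j) * phi x \<partial>lborel))" using ge[OF c] by simp
    also have "t * (\<integral>x. (g x $ j) * phi x \<partial>lborel) = (\<integral>x. ((t *\<^sub>R g x) $ j) * phi x \<partial>lborel)"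
      by (subst integral_mult_right_zero[symmetric]) (simp add: mult.assoc)
    finally show "(\<integral>x. t * w x * (dphi x $ j) \<partial>lborel) = - (\<integral>x. ((t *\<^sub>R g x) $ j) * phi x \<partial>lborel)" .
  qed
qed

lemma grad_is_weak: "\<exists>g. is_weak_grad w g \<Longrightarrow> is_weak_grad w (grad w)"
proof -
  assume "\<exists>g. is_weak_grad w g"
  then show "is_weak_grad w (grad w)" unfolding grad_def by (rule someI_ex[where P="is_weak_grad w"])
qed

lemma grad_scale_ae:
  assumes "\<exists>g. is_weak_grad w g"
  shows "AE x in lborel. grad (\<lambda>x. t * w x) x = t *\<^sub>R grad w x"
proof -
  have a: "is_weak_grad (\<lambda>x. t * w x) (\<lambda>x. t *\<^sub>R grad w x)"
    by (rule weak_grad_scale[OF grad_is_weak[OF assms]])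
  then have "is_weak_grad (\<lambda>x. t * w x) (grad (\<lambda>x. t * w x))" by (intro grad_is_weak) blast
  from weak_grad_unique[OF this a] show ?thesis .
qed

lemma grad_noexist:
  assumes "\<not> (\<exists>g. is_weak_grad w g)" and t: "t \<noteq> 0"
  shows "grad (\<lambda>x. t * w x) = grad w"
proof -
  have "\<not> is_weak_grad (\<lambda>x. t * w x) g" for g
  proof
    assume "is_weak_grad (\<lambda>x. t * w x) g"
    from weak_grad_scale[OF this, of "1/t"] have "is_weak_grad w (\<lambda>x. (1/t) *\<^sub>R g x)"
      using t by simp
    then show False using assms by blast
  qed
  then have "is_weak_grad (\<lambda>x. t * w x) = is_weak_grad w" using assms by (auto intro!: ext)
  then show ?thesis by (simp add: grad_def)
qed

lemma grad_meas: "\<exists>g. is_weak_grad w g \<Longrightarrow> grad w \<in> borel_measurable lborel"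
  using grad_is_weak[of w] by (auto simp: is_weak_grad_def)

lemma h1_sq_nonneg: "0 \<le> h1_sq w"
  unfolding h1_sq_def by (intro add_nonneg_nonneg integral_nonneg_AE) auto

lemma h1_sq_scale:
  assumes t: "t \<noteq> 0"
  shows "h1_sq (\<lambda>x. t * w x) \<le> max (t^2) 1 * h1_sq w"
proof -
  let ?A = "\<integral>x. (w x)\<^sup>2 \<partial>lborel" and ?B = "\<integral>x. (norm (grad w x))\<^sup>2 \<partial>lborel"
  have A0: "0 \<le> ?A" and B0: "0 \<le> ?B" by (auto intro: integral_nonneg_AE)
  have A: "(\<integral>x. (t * w x)\<^sup>2 \<partial>lborel) = t^2 * ?A"
    by (subst integral_mult_right_zero[symmetric]) (simp add: power_mult_distrib)
  have B: "(\<integral>x. (norm (grad (\<lambda>x. t * w x) x))\<^sup>2 \<partial>lborel) \<le> max (t^2) 1 * ?B"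
  proof (cases "\<exists>g. is_weak_grad w g")
    case True
    note gm[measurable] = grad_meas[OF True]
    have ex2: "\<exists>g. is_weak_grad (\<lambda>x. t * w x) g" using weak_grad_scale[OF grad_is_weak[OF True]] by blast
    note gm2[measurable] = grad_meas[OF ex2]
    have "(\<integral>x. (norm (grad (\<lambda>x. t * w x) x))\<^sup>2 \<partial>lborel) = (\<integral>x. (norm (t *\<^sub>R grad w x))\<^sup>2 \<partial>lborel)"
      by (rule integral_cong_AE) (use grad_scale_ae[OF True, of t] in \<open>auto elim!: eventually_mono\<close>)
    also have "\<dots> = t^2 * ?B"
      by (subst integral_mult_right_zero[symmetric]) (simp add: power_mult_distrib)
    also have "\<dots> \<le> max (t^2) 1 * ?B" using B0 by (intro mult_right_mono) auto
    finally show ?thesis .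
  next
    case False
    then have "grad (\<lambda>x. t * w x) = grad w" by (rule grad_noexist[OF _ t])
    moreover have "1 * ?B \<le> max (t^2) 1 * ?B" by (rule mult_right_mono[OF _ B0]) simp
    ultimately show ?thesis by simp
  qed
  have "t^2 * ?A \<le> max (t^2) 1 * ?A" using A0 by (intro mult_right_mono) auto
  then show ?thesis unfolding h1_sq_def A using B by (simp add: distrib_left)
qed

lemma test_fun_scale:
  assumes "test_fun phi Om" "t \<noteq> 0"
  shows "test_fun (\<lambda>x. t * phi x) Om"
proof -
  obtain dphi where c: "c1c_grad phi dphi" and s: "closure {x. phi x \<noteq> 0} \<subseteq> Om"
    using assms(1) by (auto simp: test_fun_def)
  have eqs: "{x. t * phi x \<noteq> 0} = {x. phi x \<noteq> 0}" using assms(2) by auto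
  have "c1c_grad (\<lambda>x. t * phi x) (\<lambda>x. t *\<^sub>R dphi x)"
    unfolding c1c_grad_def
  proof (intro conjI allI)
    show "continuous_on UNIV (\<lambda>x. t *\<^sub>R dphi x)" using c by (auto simp: c1c_grad_def intro: continuous_intros)
    fix x
    have "(phi has_derivative (\<lambda>h. dphi x \<bullet> h)) (at x)" using c by (auto simp: c1c_grad_def)
    from has_derivative_mult_right[OF this, of t]
    show "((\<lambda>x. t * phi x) has_derivative (\<lambda>h. (t *\<^sub>R dphi x) \<bullet> h)) (at x)" by simp
  next
    show "compact (closure {x. t * phi x \<noteq> 0})" using c eqs by (simp add: c1c_grad_def)
  qed
  then show ?thesis using s eqs by (auto simp: test_fun_def)
qed

lemma H1_scale: "H1 u \<Longrightarrow> H1 (\<lambda>x. t * u x)"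
proof -
  assume H: "H1 u"
  have um[measurable]: "u \<in> borel_measurable lborel" and ui: "integrable lborel (\<lambda>x. (u x)\<^sup>2)"
    and ex: "\<exists>g. is_weak_grad u g" using H by (auto simp: H1_def)
  have m: "(\<lambda>x. t * u x) \<in> borel_measurable lborel" by measurable
  have "integrable lborel (\<lambda>x. t^2 * (u x)\<^sup>2)" using ui by (rule integrable_mult_right)
  then have i: "integrable lborel (\<lambda>x. (t * u x)\<^sup>2)" by (simp add: power_mult_distrib)
  from ex obtain g where "is_weak_grad u g" by blast
  from weak_grad_scale[OF this, of t] have "\<exists>g. is_weak_grad (\<lambda>x. t * u x) g" by blast
  with m i show ?thesis unfolding H1_def by blast
qed

lemma H10_scale:
  assumes "H10 Om u" "t \<noteq> 0"
  shows "H10 Om (\<lambda>x. t * u x)"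
proof -
  obtain phis where tp: "\<And>n. test_fun (phis n) Om" and l: "(\<lambda>n. h1_sq (\<lambda>x. phis n x - u x)) \<longlonglongrightarrow> 0"
    using assms(1) by (auto simp: H10_def)
  have "(\<lambda>n. h1_sq (\<lambda>x. t * phis n x - t * u x)) \<longlonglongrightarrow> 0"
  proof (rule tendsto_sandwich[of "\<lambda>n. 0" _ _ "\<lambda>n. max (t^2) 1 * h1_sq (\<lambda>x. phis n x - u x)"])
    show "\<forall>\<^sub>F n in sequentially. 0 \<le> h1_sq (\<lambda>x. t * phis n x - t * u x)" by (simp add: h1_sq_nonneg)
    have "h1_sq (\<lambda>x. t * phis n x - t * u x) \<le> max (t^2) 1 * h1_sq (\<lambda>x. phis n x - u x)" for n
      using h1_sq_scale[OF assms(2), of "\<lambda>x. phis n x - u x"] by (simp add: right_diff_distrib)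
    then show "\<forall>\<^sub>F n in sequentially. h1_sq (\<lambda>x. t * phis n x - t * u x) \<le> max (t^2) 1 * h1_sq (\<lambda>x. phis n x - u x)"
      by simp
    show "(\<lambda>n. 0) \<longlonglongrightarrow> (0::real)" by simp
    from tendsto_mult[OF tendsto_const l, of "max (t^2) 1"]
    show "(\<lambda>n. max (t^2) 1 * h1_sq (\<lambda>x. phis n x - u x)) \<longlonglongrightarrow> 0" by simp
  qed
  moreover have "H1 (\<lambda>x. t * u x)" using assms(1) by (intro H1_scale) (simp add: H10_def)
  moreover have "\<forall>n. test_fun (\<lambda>x. t * phis n x) Om" using tp test_fun_scale assms(2) by blast
  ultimately have "\<exists>phis. (\<forall>n. test_fun (phis n) Om) \<and> (\<lambda>n. h1_sq (\<lambda>x. phis n x - t * u x)) \<longlonglongrightarrow> 0"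
    by (intro exI[where x="\<lambda>n x. t * phis n x"]) simp
  with \<open>H1 (\<lambda>x. t * u x)\<close> show ?thesis unfolding H10_def by blast
qed

lemma annulus_sets[measurable]: "annulus k r i \<in> sets lborel"
proof -
  have "open (annulus k r i)"
  proof (cases "i \<le> k")
    case True
    then have "annulus k r i = {x. r (i - 1) < norm x} \<inter> {x. norm x < r i}" by (auto simp: annulus_def)
    then show ?thesis by (auto intro!: open_Int open_Collect_less continuous_intros)
  next
    case False
    then have "annulus k r i = {x. r (i - 1) < norm x}" by (auto simp: annulus_def)
    then show ?thesis by (auto intro!: open_Collect_less continuous_intros)
  qed
  then show ?thesis by simp
qed

lemma Hi_scale:
  assumes "Hi V k r i u" "t \<noteq> 0"
  shows "Hi V k r i (\<lambda>x. t * u x)"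
proof -
  have H: "H10 (annulus k r i) u" "radial u" "\<forall>x. x \<notin> annulus k r i \<longrightarrow> u x = 0"
     "integrable lborel (\<lambda>x. V x * (u x)\<^sup>2)" using assms(1) unfolding Hi_def by blast+
  have e: "(\<lambda>x. V x * (t * u x)\<^sup>2) = (\<lambda>x. t^2 * (V x * (u x)\<^sup>2))" by (rule ext) (simp add: power_mult_distrib)
  have 1: "integrable lborel (\<lambda>x. V x * (t * u x)\<^sup>2)" unfolding e by (rule integrable_mult_right) (rule H(4))
  have 2: "H10 (annulus k r i) (\<lambda>x. t * u x)" by (rule H10_scale[OF H(1) assms(2)])
  have 3: "radial (\<lambda>x. t * u x)" using H(2) unfolding radial_def by metis
  have 4: "\<forall>x. x \<notin> annulus k r i \<longrightarrow> t * u x = 0" using H(3) by simp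
  show ?thesis unfolding Hi_def using 1 2 3 4 by blast
qed

lemma nonzero_scale: "t \<noteq> 0 \<Longrightarrow> nonzero (\<lambda>x. t * u x) = nonzero u"
  by (simp add: nonzero_def)

lemma lp_i_scale: "t > 0 \<Longrightarrow> lp_i p k r i (\<lambda>x. t * u x) = t powr p * lp_i p k r i u"
  unfolding lp_i_def by (simp add: abs_mult powr_mult)

lemma dir_i_scale:
  assumes "H1 u"
  shows "dir_i k r i (\<lambda>x. t * u x) = t^2 * dir_i k r i u"
proof -
  have True: "\<exists>g. is_weak_grad u g" using assms by (simp add: H1_def)
  note gm[measurable] = grad_meas[OF True]
  have ex2: "\<exists>g. is_weak_grad (\<lambda>x. t * u x) g" using weak_grad_scale[OF grad_is_weak[OF True]] by blast
  note gm2[measurable] = grad_meas[OF ex2]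
  have "dir_i k r i (\<lambda>x. t * u x) = (LINT x:annulus k r i|lborel. (norm (t *\<^sub>R grad u x))\<^sup>2)"
    unfolding dir_i_def set_lebesgue_integral_def
    by (rule integral_cong_AE) (use grad_scale_ae[OF True, of t] in \<open>auto elim!: eventually_mono\<close>)
  also have "\<dots> = t^2 * dir_i k r i u" unfolding dir_i_def by (simp add: power_mult_distrib)
  finally show ?thesis .
qed

lemma norm_i_sq_scale:
  assumes "H1 u" and Vc: "continuous_on UNIV V"
  shows "norm_i_sq V k r i (\<lambda>x. t * u x) = t^2 * norm_i_sq V k r i u"
proof -
  have True: "\<exists>g. is_weak_grad u g" and um[measurable]: "u \<in> borel_measurable lborel" using assms by (auto simp: H1_def)
  have Vm[measurable]: "V \<in> borel_measurable lborel" using borel_measurable_continuous_onI[OF Vc] by simp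
  note gm[measurable] = grad_meas[OF True]
  have ex2: "\<exists>g. is_weak_grad (\<lambda>x. t * u x) g" using weak_grad_scale[OF grad_is_weak[OF True]] by blast
  note gm2[measurable] = grad_meas[OF ex2]
  have "norm_i_sq V k r i (\<lambda>x. t * u x) = (LINT x:annulus k r i|lborel. (norm (t *\<^sub>R grad u x))\<^sup>2 + V x * (t * u x)\<^sup>2)"
    unfolding norm_i_sq_def set_lebesgue_integral_def
    by (rule integral_cong_AE) (use grad_scale_ae[OF True, of t] in \<open>auto elim!: eventually_mono\<close>)
  also have "\<dots> = (LINT x:annulus k r i|lborel. t^2 * ((norm (grad u x))\<^sup>2 + V x * (u x)\<^sup>2))"
    by (simp add: power_mult_distrib algebra_simps)
  also have "\<dots> = t^2 * norm_i_sq V k r i u" unfolding norm_i_sq_def by simp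
  finally show ?thesis .
qed


lemma powr_tangent:
  fixes y1 y2 E :: real
  assumes "0 < y1" "y1 \<le> y2" "1 \<le> E"
  shows "y2 powr E - y1 powr E \<le> E * y2 powr (E - 1) * (y2 - y1)"
proof (cases "y1 = y2")
  case True then show ?thesis by simp
next
  case False
  then have lt: "y1 < y2" using assms by simp
  have "\<exists>z. y1 < z \<and> z < y2 \<and> (y2 powr E - y1 powr E = (y2 - y1) * (E * z powr (E - 1)))"
  proof (rule MVT2[OF lt])
    fix x assume "y1 \<le> x" "x \<le> y2"
    then have "x > 0" using assms by simp
    then show "((\<lambda>z. z powr E) has_real_derivative E * x powr (E - 1)) (at x)"
      by (rule has_real_derivative_powr)
  qed
  then obtain z where z: "y1 < z" "z < y2" "y2 powr E - y1 powr E = (y2 - y1) * (E * z powr (E - 1))" by blast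
  have "z powr (E - 1) \<le> y2 powr (E - 1)" using z assms by (intro powr_mono2) auto
  then have "(y2 - y1) * (E * z powr (E - 1)) \<le> (y2 - y1) * (E * y2 powr (E - 1))"
    using lt assms by (intro mult_left_mono) auto
  then show ?thesis using z by (simp add: algebra_simps)
qed

lemma powr_split2: "0 < (t::real) \<Longrightarrow> t powr p = t^2 * t powr (p - 2)"
proof -
  assume t: "0 < t"
  have "t powr p = t powr (2 + (p - 2))" by simp
  also have "\<dots> = t powr 2 * t powr (p - 2)" by (rule powr_add)
  also have "t powr 2 = t^2" using t by (simp add: powr_numeral)
  finally show ?thesis .
qed

lemma powr_sq: "0 < (x::real) \<Longrightarrow> (x powr e)^2 = x powr (2 * e)"
  by (simp add: power2_eq_square powr_add[symmetric])

context
  fixes I :: "nat set" and a d c :: "nat \<Rightarrow> real" and p b :: real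
  assumes fin: "finite I" and p2: "2 < p" and p4: "p < 4" and bpos: "0 < b"
    and pos: "\<And>i. i \<in> I \<Longrightarrow> 0 \<le> d i \<and> d i \<le> a i \<and> 0 < a i \<and> 0 < c i"
begin

definition XX where "XX i D = (a i + b * d i * D) / c i"
definition FF where "FF D = (\<Sum>i\<in>I. d i * XX i D powr (2/(p-2)))"
definition good where "good D \<longleftrightarrow> 0 \<le> D \<and> FF D = D \<and> (\<forall>i\<in>I. (4-p) * (a i + b * d i * D) < 2 * a i)"
definition PP where "PP t \<longleftrightarrow> (\<forall>i\<in>I. t i ^2 * a i + b * (t i^2 * d i)^2 + b * (t i^2 * d i) * (\<Sum>j\<in>I-{i}. t j^2 * d j) = t i powr p * c i
     \<and> (4 - p) * (t i powr p * c i) < 2 * (t i^2 * a i))"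

lemma XX_pos: "i \<in> I \<Longrightarrow> 0 \<le> D \<Longrightarrow> 0 < XX i D"
  using pos[of i] bpos unfolding XX_def by (intro divide_pos_pos add_pos_nonneg mult_nonneg_nonneg) auto

lemma sum_remove_i: "i \<in> I \<Longrightarrow> (\<Sum>j\<in>I-{i}. f j) = (\<Sum>j\<in>I. f j) - (f i :: real)"
proof -
  assume i: "i \<in> I"
  have "sum f I = f i + sum f (I - {i})" by (rule sum.remove[OF fin i])
  then show ?thesis by linarith
qed

lemma from_P:
  assumes tp: "\<forall>i\<in>I. 0 < t i" and P: "PP t"
  defines "D \<equiv> (\<Sum>j\<in>I. t j^2 * d j)"
  shows "good D \<and> (\<forall>i\<in>I. t i = XX i D powr (1/(p-2)))"
proof -
  have D0: "0 \<le> D" unfolding D_def using pos by (intro sum_nonneg) auto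
  have key: "t i powr (p - 2) = XX i D \<and> (4-p) * (a i + b * d i * D) < 2 * a i" if i: "i \<in> I" for i
  proof -
    have ti: "0 < t i" using tp i by auto
    have eq: "t i ^2 * a i + b * (t i^2 * d i)^2 + b * (t i^2 * d i) * (D - t i^2 * d i) = t i powr p * c i"
      and ineq: "(4 - p) * (t i powr p * c i) < 2 * (t i^2 * a i)"
      using P i sum_remove_i[OF i, of "\<lambda>j. t j^2 * d j"] unfolding PP_def D_def by auto
    have l: "t i ^2 * a i + b * (t i^2 * d i)^2 + b * (t i^2 * d i) * (D - t i^2 * d i) = t i^2 * (a i + b * d i * D)"
      by (simp add: power2_eq_square algebra_simps)
    have r: "t i powr p * c i = t i^2 * (t i powr (p - 2) * c i)" using powr_split2[OF ti, of p] by simp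
    have t2: "0 < t i ^2" using ti by simp
    have e2: "a i + b * d i * D = t i powr (p - 2) * c i" using eq l r t2 by simp
    have ci: "0 < c i" using pos[OF i] by simp
    have "t i powr (p - 2) = XX i D" unfolding XX_def using e2 ci by (simp add: field_simps)
    moreover have "(4 - p) * (a i + b * d i * D) < 2 * a i"
    proof -
      have r': "t i powr p * c i = t i^2 * (a i + b * d i * D)" using r e2 by (simp add: mult.commute)
      have "(4 - p) * (t i^2 * (a i + b * d i * D)) < 2 * (t i^2 * a i)" using ineq unfolding r' .
      then have "t i^2 * ((4 - p) * (a i + b * d i * D)) < t i^2 * (2 * a i)"
        by (simp add: algebra_simps)
      then show ?thesis using t2 by simp
    qed
    ultimately show ?thesis by simp
  qed
  have tval: "t i = XX i D powr (1/(p-2))" if i: "i \<in> I" for i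
  proof -
    have ti: "0 < t i" using tp i by auto
    have "XX i D powr (1/(p-2)) = (t i powr (p - 2)) powr (1/(p-2))" using key[OF i] by simp
    also have "\<dots> = t i" using p2 ti by (simp add: powr_powr)
    finally show ?thesis by simp
  qed
  have "FF D = D"
  proof -
    have "FF D = (\<Sum>j\<in>I. d j * (XX j D powr (1/(p-2)))^2)"
      unfolding FF_def using XX_pos[OF _ D0] by (intro sum.cong) (auto simp: powr_sq)
    also have "\<dots> = (\<Sum>j\<in>I. t j^2 * d j)" using tval by (intro sum.cong) auto
    also have "\<dots> = D" by (simp add: D_def)
    finally show ?thesis .
  qed
  then show ?thesis using D0 key tval unfolding good_def by auto
qed

lemma to_P:
  assumes g: "good D"
  shows "(\<forall>i\<in>I. 0 < XX i D powr (1/(p-2))) \<and> PP (\<lambda>i. XX i D powr (1/(p-2)))"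
proof -
  define t where "t i = XX i D powr (1/(p-2))" for i
  have D0: "0 \<le> D" and FD: "FF D = D" and cond: "\<And>i. i \<in> I \<Longrightarrow> (4-p) * (a i + b * d i * D) < 2 * a i"
    using g unfolding good_def by auto
  have tp: "0 < t i" if "i \<in> I" for i using XX_pos[OF that D0] by (simp add: t_def)
  have t2: "t i^2 = XX i D powr (2/(p-2))" if "i \<in> I" for i
    using XX_pos[OF that D0] by (simp add: t_def powr_sq)
  have tp2: "t i powr (p - 2) = XX i D" if "i \<in> I" for i
    using XX_pos[OF that D0] p2 by (simp add: t_def powr_powr)
  have sumD: "(\<Sum>j\<in>I. t j^2 * d j) = D"
    using FD unfolding FF_def by (simp add: t2 mult.commute cong: sum.cong)
  have "PP t" unfolding PP_def
  proof
    fix i assume i: "i \<in> I"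
    have ci: "0 < c i" using pos[OF i] by simp
    have rest: "(\<Sum>j\<in>I-{i}. t j^2 * d j) = D - t i^2 * d i" using sum_remove_i[OF i, of "\<lambda>j. t j^2 * d j"] sumD by simp
    have r: "t i powr p * c i = t i^2 * (a i + b * d i * D)"
      using powr_split2[OF tp[OF i], of p] tp2[OF i] ci by (simp add: XX_def)
    show "t i ^2 * a i + b * (t i^2 * d i)^2 + b * (t i^2 * d i) * (\<Sum>j\<in>I-{i}. t j^2 * d j) = t i powr p * c i
     \<and> (4 - p) * (t i powr p * c i) < 2 * (t i^2 * a i)"
    proof
      show "t i ^2 * a i + b * (t i^2 * d i)^2 + b * (t i^2 * d i) * (\<Sum>j\<in>I-{i}. t j^2 * d j) = t i powr p * c i"
        unfolding rest r by (simp add: power2_eq_square algebra_simps)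
      have "0 < t i^2" using tp[OF i] by simp
      then have "t i^2 * ((4-p) * (a i + b * d i * D)) < t i^2 * (2 * a i)" using cond[OF i] by simp
      then show "(4 - p) * (t i powr p * c i) < 2 * (t i^2 * a i)" unfolding r by (simp add: algebra_simps)
    qed
  qed
  then show ?thesis using tp unfolding t_def[abs_def] by auto
qed

lemma good_lt:
  assumes g1: "good D1" and g2: "good D2" and lt: "D1 < D2"
  shows False
proof -
  define E where "E = 2 / (p - 2)"
  have E1: "1 \<le> E" using p2 p4 by (simp add: E_def field_simps)
  have D10: "0 \<le> D1" and F1: "FF D1 = D1" using g1 unfolding good_def by auto
  have F2: "FF D2 = D2" and cond: "\<And>i. i \<in> I \<Longrightarrow> (4-p) * (a i + b * d i * D2) < 2 * a i"
    using g2 unfolding good_def by auto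
  have D2p: "0 < D2" using D10 lt by simp
  define s2 where "s2 i = XX i D2 powr E" for i
  have per: "d i * (XX i D2 powr E - XX i D1 powr E) \<le> d i * s2 i * (D2 - D1) / D2
       \<and> (0 < d i \<longrightarrow> d i * (XX i D2 powr E - XX i D1 powr E) < d i * s2 i * (D2 - D1) / D2)" if i: "i \<in> I" for i
  proof (cases "d i = 0")
    case True then show ?thesis by simp
  next
    case False
    then have dp: "0 < d i" using pos[OF i] by simp
    have ci: "0 < c i" and ai: "0 < a i" using pos[OF i] by auto
    have y1: "0 < XX i D1" using XX_pos[OF i D10] .
    have y2: "0 < XX i D2" using XX_pos[OF i] D2p by simp
    have le: "XX i D1 \<le> XX i D2" unfolding XX_def using lt dp bpos ci
      by (intro divide_right_mono add_left_mono mult_left_mono) auto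
    have tan: "XX i D2 powr E - XX i D1 powr E \<le> E * XX i D2 powr (E - 1) * (XX i D2 - XX i D1)"
      by (rule powr_tangent[OF y1 le E1])
    have pd: "XX i D2 powr (E - 1) = s2 i / XX i D2" unfolding s2_def using y2 by (simp add: powr_diff)
    define x2 where "x2 = a i + b * d i * D2"
    have x2p: "0 < x2" using y2 ci unfolding XX_def x2_def by (simp add: zero_less_divide_iff)
    have diffX: "XX i D2 - XX i D1 = b * d i * (D2 - D1) / c i" unfolding XX_def using ci by (simp add: field_simps)
    have "E * XX i D2 powr (E - 1) * (XX i D2 - XX i D1) = s2 i * (D2 - D1) * (E * b * d i / x2)"
    proof -
      have XXx2: "XX i D2 = x2 / c i" by (simp add: XX_def x2_def)
      have "E * XX i D2 powr (E - 1) * (XX i D2 - XX i D1) = E * (s2 i / XX i D2) * (b * d i * (D2 - D1) / c i)"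
        by (simp only: pd diffX)
      also have "\<dots> = s2 i * (D2 - D1) * (E * b * d i / x2)" unfolding XXx2 using ci x2p by (simp add: field_simps)
      finally show ?thesis .
    qed
    with tan have t1: "XX i D2 powr E - XX i D1 powr E \<le> s2 i * (D2 - D1) * (E * b * d i / x2)" by simp
    have q: "E * b * d i / x2 < 1 / D2"
    proof -
      have "(4 - p) * (b * d i * D2) < (p - 2) * a i" using cond[OF i] by (simp add: algebra_simps)
      then have "2 * (b * d i * D2) < (p - 2) * x2" unfolding x2_def by (simp add: algebra_simps)
      then have "E * (b * d i * D2) < x2" using p2 unfolding E_def by (simp add: field_simps)
      then show ?thesis using x2p D2p by (simp add: field_simps)
    qed
    have s2p: "0 < s2 i" unfolding s2_def using y2 by simp
    have pos3: "0 < d i * s2 i * (D2 - D1)" using dp s2p lt by simp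
    have "d i * (XX i D2 powr E - XX i D1 powr E) \<le> d i * (s2 i * (D2 - D1) * (E * b * d i / x2))"
      using t1 dp by (intro mult_left_mono) auto
    also have "\<dots> = (d i * s2 i * (D2 - D1)) * (E * b * d i / x2)" by simp
    also have "\<dots> < (d i * s2 i * (D2 - D1)) * (1 / D2)" by (rule mult_strict_left_mono[OF q pos3])
    finally show ?thesis by simp
  qed
  have ex: "\<exists>i\<in>I. 0 < d i"
  proof (rule ccontr)
    assume "\<not> (\<exists>i\<in>I. 0 < d i)"
    then have "\<forall>i\<in>I. d i = 0" using pos by force
    then have "FF D2 = 0" unfolding FF_def by simp
    then show False using F2 D2p by simp
  qed
  have "(\<Sum>i\<in>I. d i * (XX i D2 powr E - XX i D1 powr E)) < (\<Sum>i\<in>I. d i * s2 i * (D2 - D1) / D2)"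
    using per ex fin by (intro sum_strict_mono_ex1) auto
  moreover have "(\<Sum>i\<in>I. d i * (XX i D2 powr E - XX i D1 powr E)) = FF D2 - FF D1"
    unfolding FF_def E_def by (simp add: sum_subtractf right_diff_distrib)
  moreover have "(\<Sum>i\<in>I. d i * s2 i * (D2 - D1) / D2) = FF D2 * (D2 - D1) / D2"
    unfolding FF_def s2_def E_def by (simp add: sum_distrib_right sum_divide_distrib)
  ultimately show False using F1 F2 D2p by simp
qed

lemma good_unique: "good D1 \<Longrightarrow> good D2 \<Longrightarrow> D1 = D2"
  using good_lt by (metis linorder_neqE_linordered_idom)

lemma exists_good:
  fixes S :: real and k :: nat
  assumes S: "0 < S" and hr: "\<And>i. i \<in> I \<Longrightarrow> a i / (2 * S) \<le> c i powr (2 / p)"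
    and card: "card I = k + 1"
    and bb: "b < (p - 2) / (4 - p)
                    * inverse (1 + real k * 2 powr (2 / (p - 2)) * (2 / (4 - p)) powr (2 / (p - 2)))
                    * ((4 - p) / 2) powr (2 / (p - 2)) * (2 * S) powr (- (p / (p - 2)))"
  shows "\<exists>D. good D"
proof -
  define E where "E = 2 / (p - 2)"
  define th where "th = (p - 2) / (4 - p)"
  define A where "A = 2 / (4 - p)"
  define AP where "AP = A powr E"
  define M where "M = (2 * S) powr (p / (p - 2))"
  define T where "T = 2 powr E"
  define Ds where "Ds = th / b"
  have E0: "0 < E" using p2 by (simp add: E_def)
  have th0: "0 < th" using p2 p4 by (simp add: th_def)
  have A1: "1 \<le> A" using p2 p4 by (simp add: A_def field_simps)
  have AP1: "1 \<le> AP" unfolding AP_def using A1 E0 by (intro ge_one_powr_ge_zero) auto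
  have T1: "1 \<le> T" unfolding T_def using E0 by (intro ge_one_powr_ge_zero) auto
  have M0: "0 < M" using S by (simp add: M_def)
  have Ds0: "0 < Ds" using th0 bpos by (simp add: Ds_def)
  have Ath: "A = 1 + th" using p2 p4 by (simp add: A_def th_def field_simps)
  have bhat: "(p - 2) / (4 - p)
                    * inverse (1 + real k * 2 powr (2 / (p - 2)) * (2 / (4 - p)) powr (2 / (p - 2)))
                    * ((4 - p) / 2) powr (2 / (p - 2)) * (2 * S) powr (- (p / (p - 2)))
         = th / ((1 + real k * T * AP) * AP * M)"
  proof -
    have inv: "((4 - p) / 2) powr E = 1 / AP"
    proof -
      have "((4 - p) / 2) powr E * AP = (((4 - p) / 2) * A) powr E" unfolding AP_def by (rule powr_mult[symmetric])
      also have "((4 - p) / 2) * A = 1" using p4 by (simp add: A_def)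
      finally show ?thesis using AP1 by (simp add: field_simps)
    qed
    have m: "(2 * S) powr (- (p / (p - 2))) = 1 / M" unfolding M_def by (rule powr_minus_divide)
    show ?thesis unfolding E_def[symmetric] inv m th_def[symmetric] T_def[symmetric]
      unfolding A_def[symmetric] AP_def[symmetric] by (simp add: field_simps)
  qed
  have bound: "(1 + real k) * AP * M < Ds"
  proof -
    have pos: "0 < (1 + real k * T * AP) * AP * M" using T1 AP1 M0 by (intro mult_pos_pos add_pos_nonneg) auto
    have "b < th / ((1 + real k * T * AP) * AP * M)" using bb bhat by simp
    then have "(1 + real k * T * AP) * AP * M < th / b" using pos bpos by (simp add: field_simps)
    moreover have "(1 + real k) * AP * M \<le> (1 + real k * T * AP) * AP * M"
    proof -
      have "1 * 1 \<le> T * AP" using T1 AP1 by (intro mult_mono) auto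
      then have "real k * 1 \<le> real k * (T * AP)" by (intro mult_left_mono) auto
      then have "1 + real k \<le> 1 + real k * T * AP" by (simp add: mult.assoc)
      then show ?thesis using AP1 M0 by (intro mult_right_mono) auto
    qed
    ultimately show ?thesis unfolding Ds_def by simp
  qed
  have tm: "d i * XX i Ds powr E \<le> AP * M" if i: "i \<in> I" for i
  proof -
    have di: "0 \<le> d i" "d i \<le> a i" and ai: "0 < a i" and ci: "0 < c i" using pos[OF i] by auto
    have "XX i Ds = (a i + th * d i) / c i" unfolding XX_def Ds_def using bpos by simp
    also have "\<dots> \<le> A * (a i / c i)"
    proof -
      have "a i + th * d i \<le> a i + th * a i" using th0 di by (intro add_left_mono mult_left_mono) auto
      then have "(a i + th * d i) / c i \<le> (a i + th * a i) / c i" using ci by (intro divide_right_mono) auto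
      also have "(a i + th * a i) / c i = A * (a i / c i)" unfolding Ath by (simp add: algebra_simps)
      finally show ?thesis .
    qed
    finally have Xle: "XX i Ds \<le> A * (a i / c i)" .
    have "XX i Ds powr E \<le> (A * (a i / c i)) powr E"
      using Xle XX_pos[OF i Ds0[THEN less_imp_le]] E0 by (intro powr_mono2) auto
    also have "\<dots> = AP * (a i powr E / c i powr E)" unfolding AP_def by (simp add: powr_mult powr_divide)
    also have "\<dots> \<le> AP * (M / a i)"
    proof -
      have cE: "c i powr E = (c i powr (2 / p)) powr (p / (p - 2))"
        using p2 by (simp add: powr_powr E_def)
      have "(a i / (2 * S)) powr (p / (p - 2)) \<le> (c i powr (2 / p)) powr (p / (p - 2))"
        using hr[OF i] ai S p2 by (intro powr_mono2) auto
      then have cge: "a i powr (p / (p - 2)) / M \<le> c i powr E" unfolding cE M_def by (simp add: powr_divide)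
      have apos: "0 < a i powr (p / (p - 2))" using ai by simp
      have "a i powr E / c i powr E \<le> a i powr E / (a i powr (p / (p - 2)) / M)"
      proof -
        have "0 < c i powr E * (a i powr (p / (p - 2)) / M)" using ci apos M0 by simp
        then show ?thesis by (rule divide_left_mono[OF cge powr_ge_zero])
      qed
      also have "\<dots> = M * (a i powr E / a i powr (p / (p - 2)))" using M0 by (simp add: field_simps)
      also have "a i powr E / a i powr (p / (p - 2)) = a i powr (E - p / (p - 2))" by (simp add: powr_diff)
      also have "E - p / (p - 2) = -1"
      proof -
        have "E - p / (p - 2) = (2 - p) / (p - 2)" unfolding E_def by (simp add: diff_divide_distrib)
        also have "\<dots> = -1" using p2 by (simp add: divide_eq_eq)
        finally show ?thesis .
      qed
      also have "a i powr (-1) = 1 / a i" using ai by (simp add: powr_minus_divide)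
      finally have "a i powr E / c i powr E \<le> M / a i" by simp
      then show ?thesis using AP1 by (intro mult_left_mono) auto
    qed
    finally have sig: "XX i Ds powr E \<le> AP * (M / a i)" .
    have "d i * XX i Ds powr E \<le> d i * (AP * (M / a i))" using sig di by (intro mult_left_mono) auto
    also have "\<dots> = (d i / a i) * (AP * M)" by simp
    also have "\<dots> \<le> 1 * (AP * M)" using di ai AP1 M0 by (intro mult_right_mono) auto
    finally show ?thesis by simp
  qed
  have FDs: "FF Ds < Ds"
  proof -
    have "FF Ds \<le> of_nat (card I) * (AP * M)"
      unfolding FF_def E_def[symmetric] by (rule sum_bounded_above) (rule tm)
    also have "\<dots> = (1 + real k) * AP * M" using card by simp
    finally show ?thesis using bound by simp
  qed
  define G where "G D = FF D - D" for D
  have cont: "continuous_on {0..Ds} G"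
  proof -
    have "continuous_on {0..Ds} (\<lambda>D. (\<Sum>i\<in>I. d i * ((a i + b * d i * D) / c i) powr (2/(p-2))) - D)"
    proof (intro continuous_intros ballI)
      fix i D assume i: "i \<in> I" and D: "D \<in> {0..Ds}"
      have "0 < (a i + b * d i * D) / c i" using XX_pos[OF i, of D] D unfolding XX_def by simp
      then show "(a i + b * d i * D) / c i \<noteq> 0" by linarith
    qed (use pos in fastforce)
    then show ?thesis unfolding G_def[abs_def] FF_def XX_def .
  qed
  have G0: "0 \<le> G 0" unfolding G_def FF_def using pos by (auto intro!: sum_nonneg)
  have GD: "G Ds < 0" using FDs by (simp add: G_def)
  obtain D where D: "0 \<le> D" "D \<le> Ds" "G D = 0"
    using IVT2'[of G Ds 0 0] cont G0 GD Ds0 by auto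
  have DDs: "D < Ds" using D GD by (cases "D = Ds") auto
  have "good D" unfolding good_def
  proof (intro conjI ballI)
    show "0 \<le> D" by fact
    show "FF D = D" using D by (simp add: G_def)
    fix i assume i: "i \<in> I"
    have di: "0 \<le> d i" "d i \<le> a i" and ai: "0 < a i" using pos[OF i] by auto
    have "b * d i * D \<le> b * a i * D" using di bpos D by (intro mult_right_mono mult_left_mono) auto
    also have "\<dots> < b * a i * Ds" using ai bpos DDs by simp
    also have "\<dots> = th * a i" using bpos by (simp add: Ds_def)
    finally have "b * d i * D < th * a i" .
    then have "(4 - p) * (b * d i * D) < (4 - p) * (th * a i)" using p4 by simp
    also have "(4 - p) * (th * a i) = (p - 2) * a i" using p4 by (simp add: th_def)
    finally show "(4 - p) * (a i + b * d i * D) < 2 * a i" by (simp add: algebra_simps)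
  qed
  then show ?thesis by blast
qed

lemma alg_main:
  fixes S :: real and k :: nat
  assumes S: "0 < S" and hr: "\<And>i. i \<in> I \<Longrightarrow> a i / (2 * S) \<le> c i powr (2 / p)"
    and card: "card I = k + 1"
    and bb: "b < (p - 2) / (4 - p)
                    * inverse (1 + real k * 2 powr (2 / (p - 2)) * (2 / (4 - p)) powr (2 / (p - 2)))
                    * ((4 - p) / 2) powr (2 / (p - 2)) * (2 * S) powr (- (p / (p - 2)))"
  shows "\<exists>t. (\<forall>i\<in>I. 0 < t i) \<and> (\<forall>i\<in>I. t i ^2 * a i + b * (t i^2 * d i)^2 + b * (t i^2 * d i) * (\<Sum>j\<in>I-{i}. t j^2 * d j) = t i powr p * c i
     \<and> (4 - p) * (t i powr p * c i) < 2 * (t i^2 * a i))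
     \<and> (\<forall>t'. (\<forall>i\<in>I. 0 < t' i) \<and> (\<forall>i\<in>I. t' i ^2 * a i + b * (t' i^2 * d i)^2 + b * (t' i^2 * d i) * (\<Sum>j\<in>I-{i}. t' j^2 * d j) = t' i powr p * c i
     \<and> (4 - p) * (t' i powr p * c i) < 2 * (t' i^2 * a i)) \<longrightarrow> (\<forall>i\<in>I. t' i = t i))"
proof -
  obtain D where g: "good D" using exists_good[OF S hr card bb] by blast
  define t where "t i = XX i D powr (1/(p-2))" for i
  have t: "(\<forall>i\<in>I. 0 < t i) \<and> PP t" using to_P[OF g] unfolding t_def[abs_def] .
  have u: "\<forall>i\<in>I. t' i = t i" if "(\<forall>i\<in>I. 0 < t' i) \<and> PP t'" for t'
  proof -
    define D' where "D' = (\<Sum>j\<in>I. t' j^2 * d j)"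
    have "good D' \<and> (\<forall>i\<in>I. t' i = XX i D' powr (1/(p-2)))" unfolding D'_def using from_P that by blast
    moreover have "D' = D" using calculation good_unique g by blast
    ultimately show ?thesis by (simp add: t_def)
  qed
  show ?thesis using t u unfolding PP_def by blast
qed

end


lemma Hi_H1: "Hi V k r i w \<Longrightarrow> H1 w"
  by (simp add: Hi_def H10_def)

lemma nminus_iff:
  assumes Vc: "continuous_on UNIV V" and hu: "Hk V k r u" and tp: "\<forall>i\<in>{1..k+1}. 0 < t i"
    and hnz: "\<forall>i\<in>{1..k+1}. nonzero (u i)"
  shows "Nminus V p b k r (\<lambda>i x. t i * u i x) \<longleftrightarrow>
    (\<forall>i\<in>{1..k+1}. t i ^2 * norm_i_sq V k r i (u i) + b * (t i^2 * dir_i k r i (u i))^2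
        + b * (t i^2 * dir_i k r i (u i)) * (\<Sum>j\<in>{1..k+1}-{i}. t j^2 * dir_i k r j (u j)) = t i powr p * lp_i p k r i (u i)
     \<and> (4 - p) * (t i powr p * lp_i p k r i (u i)) < 2 * (t i^2 * norm_i_sq V k r i (u i)))"
proof -
  have Hi: "Hi V k r i (u i)" if "i \<in> {1..k+1}" for i using hu that by (simp add: Hk_def)
  have Hk2: "Hk V k r (\<lambda>i x. t i * u i x)" unfolding Hk_def
    using Hi tp by (auto intro!: Hi_scale)
  have nz: "nonzero (\<lambda>x. t i * u i x)" if "i \<in> {1..k+1}" for i
  proof -
    have "t i \<noteq> 0" using tp that by fastforce
    then show ?thesis using nonzero_scale[of "t i" "u i"] hnz that by simp
  qed
  have nsq: "norm_i_sq V k r i (\<lambda>x. t i * u i x) = t i^2 * norm_i_sq V k r i (u i)" if "i \<in> {1..k+1}" for i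
    by (rule norm_i_sq_scale[OF Hi_H1[OF Hi[OF that]] Vc])
  have dsq: "dir_i k r i (\<lambda>x. t i * u i x) = t i^2 * dir_i k r i (u i)" if "i \<in> {1..k+1}" for i
    by (rule dir_i_scale[OF Hi_H1[OF Hi[OF that]]])
  have lsq: "lp_i p k r i (\<lambda>x. t i * u i x) = t i powr p * lp_i p k r i (u i)" if "i \<in> {1..k+1}" for i
    using tp that by (intro lp_i_scale) auto
  have ssq: "(\<Sum>j\<in>{1..k+1}-{i}. dir_i k r j (\<lambda>x. t j * u j x)) = (\<Sum>j\<in>{1..k+1}-{i}. t j^2 * dir_i k r j (u j))" for i
    by (rule sum.cong) (auto simp: dsq)
  have pt: "(nonzero (\<lambda>x. t i * u i x)
      \<and> norm_i_sq V k r i (\<lambda>x. t i * u i x) + b * (dir_i k r i (\<lambda>x. t i * u i x))\<^sup>2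
          + b * dir_i k r i (\<lambda>x. t i * u i x) * (\<Sum>j\<in>{1..k+1} - {i}. dir_i k r j (\<lambda>x. t j * u j x)) = lp_i p k r i (\<lambda>x. t i * u i x)
      \<and> (4 - p) * lp_i p k r i (\<lambda>x. t i * u i x) < 2 * norm_i_sq V k r i (\<lambda>x. t i * u i x))
    = (t i ^2 * norm_i_sq V k r i (u i) + b * (t i^2 * dir_i k r i (u i))^2
        + b * (t i^2 * dir_i k r i (u i)) * (\<Sum>j\<in>{1..k+1}-{i}. t j^2 * dir_i k r j (u j)) = t i powr p * lp_i p k r i (u i)
     \<and> (4 - p) * (t i powr p * lp_i p k r i (u i)) < 2 * (t i^2 * norm_i_sq V k r i (u i)))"
    if i: "i \<in> {1..k+1}" for i
    unfolding nsq[OF i] dsq[OF i] lsq[OF i] ssq using nz[OF i] by simp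
  show ?thesis unfolding Nminus_def using Hk2 pt by (simp only: ball_cong[OF refl pt]) simp
qed

lemma V_nonneg: "cond_V V \<Longrightarrow> 0 \<le> V x"
proof -
  assume h: "cond_V V"
  then have "(INF x. V x) \<le> V x" by (intro cINF_lower) (auto simp: cond_V_def)
  moreover have "(INF x. V x) > 0" using h by (simp add: cond_V_def)
  ultimately show ?thesis by simp
qed

lemma set_int_nonneg: "(\<And>x. 0 \<le> f x) \<Longrightarrow> 0 \<le> (LINT x:A|lborel. (f x :: real))"
  unfolding set_lebesgue_integral_def by (intro integral_nonneg_AE) (auto simp: indicator_def)

lemma d_le_a:
  assumes hV: "cond_V V" and Hi: "Hi V k r i w"
  shows "0 \<le> dir_i k r i w \<and> dir_i k r i w \<le> norm_i_sq V k r i w"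
proof -
  have ex: "\<exists>g. is_weak_grad w g" using Hi_H1[OF Hi] by (simp add: H1_def)
  have gi: "integrable lborel (\<lambda>x. (norm (grad w x))\<^sup>2)" using grad_is_weak[OF ex] by (simp add: is_weak_grad_def)
  have Vi: "integrable lborel (\<lambda>x. V x * (w x)\<^sup>2)" using Hi by (simp add: Hi_def)
  have s1: "set_integrable lborel (annulus k r i) (\<lambda>x. (norm (grad w x))\<^sup>2)"
    unfolding set_integrable_def by (rule integrable_mult_indicator[OF annulus_sets gi])
  have s2: "set_integrable lborel (annulus k r i) (\<lambda>x. V x * (w x)\<^sup>2)"
    unfolding set_integrable_def by (rule integrable_mult_indicator[OF annulus_sets Vi])
  have "norm_i_sq V k r i w = dir_i k r i w + (LINT x:annulus k r i|lborel. V x * (w x)\<^sup>2)"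
    unfolding norm_i_sq_def dir_i_def by (rule set_integral_add(2)[OF s1 s2])
  moreover have "0 \<le> (LINT x:annulus k r i|lborel. V x * (w x)\<^sup>2)"
    using V_nonneg[OF hV] by (intro set_int_nonneg) simp
  moreover have "0 \<le> dir_i k r i w" unfolding dir_i_def by (intro set_int_nonneg) simp
  ultimately show ?thesis by simp
qed

theorem lemma2p1:
  fixes V :: "R3 \<Rightarrow> real" and p :: real and k :: nat and r :: "nat \<Rightarrow> real"
    and u :: "nat \<Rightarrow> R3 \<Rightarrow> real"
  assumes hp: "2 < p" "p < 4"
    and hV: "cond_V V"
    and hk: "k \<ge> 1"
    and hr: "Lambda k r"
    and hu: "Hk V k r u"
    and hnz: "\<forall>i\<in>{1..k+1}. nonzero (u i)"
    and hratio: "\<forall>i\<in>{1..k+1}.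
        (lp_i p k r i (u i)) powr (2 / p) / norm_i_sq V k r i (u i) \<ge> 1 / (2 * S_const V p)"
  shows "let S = S_const V p;
             bhat = (p - 2) / (4 - p)
                    * inverse (1 + real k * 2 powr (2 / (p - 2)) * (2 / (4 - p)) powr (2 / (p - 2)))
                    * ((4 - p) / 2) powr (2 / (p - 2)) * (2 * S) powr (- (p / (p - 2)));
             bstar = min ((p - 2) / (4 - p) * ((4 - p) / 2) powr (2 / (p - 2)) * (2 * S) powr (- (p / (p - 2))))
                         bhat
         in \<forall>b. 0 < b \<and> b < bstar \<longrightarrow>
              (\<exists>t. (\<forall>i\<in>{1..k+1}. 0 < t i) \<and> Nminus V p b k r (\<lambda>i x. t i * u i x)
                 \<and> (\<forall>t'. (\<forall>i\<in>{1..k+1}. 0 < t' i) \<and> Nminus V p b k r (\<lambda>i x. t' i * u i x)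
                        \<longrightarrow> (\<forall>i\<in>{1..k+1}. t' i = t i)))"
proof -
  define S where "S = S_const V p"
  define I where "I = {1..k+1::nat}"
  have Vc: "continuous_on UNIV V" using hV by (simp add: cond_V_def)
  have Hi: "Hi V k r i (u i)" if "i \<in> I" for i using hu that by (simp add: Hk_def I_def)
  have S0: "0 \<le> S"
  proof -
    let ?X = "{Hnorm_sq V w / (Lp_int p w) powr (2 / p) | w. Hsp V w \<and> nonzero w}"
    have "1 \<in> I" by (simp add: I_def)
    have "Hsp V (u 1)" using Hi[OF \<open>1 \<in> I\<close>] Hi_H1[OF Hi[OF \<open>1 \<in> I\<close>]] by (simp add: Hsp_def Hi_def)
    moreover have "nonzero (u 1)" using hnz by simp
    ultimately have ne: "?X \<noteq> {}" by blast
    have "0 \<le> y" if "y \<in> ?X" for y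
    proof -
      obtain w where y: "y = Hnorm_sq V w / (Lp_int p w) powr (2 / p)" using \<open>y \<in> ?X\<close> by blast
      have "0 \<le> Hnorm_sq V w" unfolding Hnorm_sq_def using V_nonneg[OF hV]
        by (intro integral_nonneg_AE) (auto intro!: add_nonneg_nonneg mult_nonneg_nonneg)
      then show ?thesis unfolding y by simp
    qed
    then show ?thesis unfolding S_def S_const_def by (intro cInf_greatest[OF ne]) blast
  qed
  show ?thesis unfolding Let_def S_def[symmetric]
  proof (intro allI impI)
    fix b assume b: "0 < b \<and> b < min ((p - 2) / (4 - p) * ((4 - p) / 2) powr (2 / (p - 2)) * (2 * S) powr (- (p / (p - 2))))
                         ((p - 2) / (4 - p)
                    * inverse (1 + real k * 2 powr (2 / (p - 2)) * (2 / (4 - p)) powr (2 / (p - 2)))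
                    * ((4 - p) / 2) powr (2 / (p - 2)) * (2 * S) powr (- (p / (p - 2))))"
    show "\<exists>t. (\<forall>i\<in>{1..k+1}. 0 < t i) \<and> Nminus V p b k r (\<lambda>i x. t i * u i x)
                 \<and> (\<forall>t'. (\<forall>i\<in>{1..k+1}. 0 < t' i) \<and> Nminus V p b k r (\<lambda>i x. t' i * u i x)
                        \<longrightarrow> (\<forall>i\<in>{1..k+1}. t' i = t i))"
    proof (cases "S = 0")
      case True
      then have "b < 0" using b by simp
      then show ?thesis using b by linarith
    next
      case False
      then have Sp: "0 < S" using S0 by simp
      have bb: "b < (p - 2) / (4 - p)
                    * inverse (1 + real k * 2 powr (2 / (p - 2)) * (2 / (4 - p)) powr (2 / (p - 2)))
                    * ((4 - p) / 2) powr (2 / (p - 2)) * (2 * S) powr (- (p / (p - 2)))" using b by simp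
      define a where "a i = norm_i_sq V k r i (u i)" for i
      define d where "d i = dir_i k r i (u i)" for i
      define c where "c i = lp_i p k r i (u i)" for i
      have props: "0 \<le> d i \<and> d i \<le> a i \<and> 0 < a i \<and> 0 < c i \<and> a i / (2 * S) \<le> c i powr (2 / p)" if i: "i \<in> I" for i
      proof -
        have da: "0 \<le> d i" "d i \<le> a i" using d_le_a[OF hV Hi[OF i]] by (auto simp: a_def d_def)
        have hr: "1 / (2 * S) \<le> c i powr (2 / p) / a i" using hratio i unfolding I_def S_def a_def c_def by blast
        have ha: "0 < a i"
        proof (rule ccontr)
          assume "\<not> 0 < a i"
          then have "a i = 0" using da by simp
          then show False using hr Sp by simp
        qed
        have hc: "a i / (2 * S) \<le> c i powr (2 / p)"
        proof -
          have "a i * (1 / (2 * S)) \<le> a i * (c i powr (2 / p) / a i)" using hr ha by (intro mult_left_mono) auto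
          then show ?thesis using ha by simp
        qed
        have c0: "0 \<le> c i" unfolding c_def lp_i_def by (intro set_int_nonneg) simp
        have "c i \<noteq> 0"
        proof
          assume "c i = 0"
          then have "c i powr (2 / p) = 0" by simp
          then show False using hc ha Sp by (simp add: divide_le_0_iff)
        qed
        then show ?thesis using da ha hc c0 by simp
      qed
      have card: "card I = k + 1" by (simp add: I_def)
      have p2: "2 < p" and p4: "p < 4" using hp by auto
      from alg_main[where I=I and a=a and d=d and c=c and p=p and b=b and S=S and k=k, OF _ p2 p4 _ _ Sp _ card bb] props b
      obtain t where t1: "\<forall>i\<in>I. 0 < t i"
        and t2: "\<forall>i\<in>I. t i ^2 * a i + b * (t i^2 * d i)^2 + b * (t i^2 * d i) * (\<Sum>j\<in>I-{i}. t j^2 * d j) = t i powr p * c i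
             \<and> (4 - p) * (t i powr p * c i) < 2 * (t i^2 * a i)"
        and t3: "\<And>t'. (\<forall>i\<in>I. 0 < t' i) \<and> (\<forall>i\<in>I. t' i ^2 * a i + b * (t' i^2 * d i)^2 + b * (t' i^2 * d i) * (\<Sum>j\<in>I-{i}. t' j^2 * d j) = t' i powr p * c i
             \<and> (4 - p) * (t' i powr p * c i) < 2 * (t' i^2 * a i)) \<Longrightarrow> (\<forall>i\<in>I. t' i = t i)"
        by (auto simp: I_def)
      have N: "Nminus V p b k r (\<lambda>i x. t i * u i x)"
        using nminus_iff[OF Vc hu t1[unfolded I_def] hnz, of p b] t2 unfolding I_def a_def d_def c_def by simp
      have U: "\<forall>i\<in>{1..k+1}. t' i = t i"
        if "(\<forall>i\<in>{1..k+1}. 0 < t' i) \<and> Nminus V p b k r (\<lambda>i x. t' i * u i x)" for t'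
      proof -
        have tp': "\<forall>i\<in>{1..k+1}. 0 < t' i" using that by blast
        have "\<forall>i\<in>I. t' i ^2 * a i + b * (t' i^2 * d i)^2 + b * (t' i^2 * d i) * (\<Sum>j\<in>I-{i}. t' j^2 * d j) = t' i powr p * c i
             \<and> (4 - p) * (t' i powr p * c i) < 2 * (t' i^2 * a i)"
          using nminus_iff[OF Vc hu tp' hnz, of p b] that unfolding I_def a_def d_def c_def by simp
        then show ?thesis using t3[of t'] tp' unfolding I_def by blast
      qed
      show ?thesis using t1 N U unfolding I_def by blast
    qed
  qed
qed

end
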